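(* Let $\alpha,\beta\in(0,1)$ with $\alpha+\beta>1$. There is a constant $C$ (depending only on $\alpha,\beta$) such that for all sufficiently large $k$: with the medium-expectation rounding defined in the context, if $X_i$ ($i\in\mathcal{M}_1^*(k)$) are independent indicators with $\mathbb{E}[X_i]=p_i$ and $Y_i$ ($i\in\mathcal{M}_1^*(k)$) are independent indicators with $\mathbb{E}[Y_i]=q_i$, then $$\left\|\sum_{i\in\mathcal{M}_1^*(k)}X_i-\sum_{i\in\mathcal{M}_1^*(k)}Y_i\right\|\le C\left(k^{-\frac{\alpha+\beta-1}{2}}+k^{-\alpha}+k^{-1/2}+k^{-(1-\beta)}\right).$$
   Context: $\|\cdot\|$ is total variation distance. Let $k$ be a positive integer, $\alpha\in(0,1)$, and $p_1,\dots,p_n\in[0,1]$. For $j=0,1,\dots,\lfloor k/2\rfloor$ let $I_j=[j/k,(j+1)/k)$ if $j<\lfloor k/2\rfloor$ and $I_{\lfloor k/2\rfloor}=[\lfloor k/2\rfloor/k,1/2]$; let $I^*_j=\{i:p_i\in I_j\}=\{j_1,\dots,j_{n_j}\}$ (listed in some fixed order, $n_j=|I^*_j|$), $p^j_i:=p_{j_i}$ and $\delta^j_i:=p^j_i-j/k$. Let $\mathcal{M}_1^*(k)=\bigcup_{j=\lfloor k^\alpha\rfloor}^{\lfloor k/2\rfloor}I^*_j$. Medium-expectation rounding: for $j=\lfloor k^\alpha\rfloor,\dots,\lfloor k/2\rfloor$ let $S_j=\sum_{i=1}^{n_j}\delta^j_i$, $m_j=\lfloor kS_j\rfloor$, and set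 $q_{j_i}=(j+1)/k$ for $i=1,\dots,m_j$ and $q_{j_i}=j/k$ for $i=m_j+1,\dots,n_j$. *)

theory Defs
  imports "HOL-Probability.Probability"
begin

definition sum_indicators_law :: "nat set \<Rightarrow> (nat \<Rightarrow> real) \<Rightarrow> nat pmf" where
  "sum_indicators_law A p =
     map_pmf (\<lambda>x. card {i\<in>A. x i}) (Pi_pmf A False (\<lambda>i. bernoulli_pmf (p i)))"

definition tv_dist :: "nat pmf \<Rightarrow> nat pmf \<Rightarrow> real" where
  "tv_dist P Q = (SUP A. \<bar>measure_pmf.prob P A - measure_pmf.prob Q A\<bar>)"

definition bucket :: "nat \<Rightarrow> nat \<Rightarrow> real set" where
  "bucket k j = (if j < k div 2 then {x. real j / real k \<le> x \<and> x < real (j+1) / real k}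
                 else {x. real (k div 2) / real k \<le> x \<and> x \<le> 1/2})"

definition Istar :: "nat \<Rightarrow> nat \<Rightarrow> (nat \<Rightarrow> real) \<Rightarrow> nat \<Rightarrow> nat set" where
  "Istar n k p j = {i\<in>{1..n}. p i \<in> bucket k j}"

definition medium_range :: "real \<Rightarrow> nat \<Rightarrow> nat set" where
  "medium_range \<alpha> k = {nat \<lfloor>real k powr \<alpha>\<rfloor> .. k div 2}"

definition M1star :: "real \<Rightarrow> nat \<Rightarrow> nat \<Rightarrow> (nat \<Rightarrow> real) \<Rightarrow> nat set" where
  "M1star \<alpha> n k p = (\<Union>j\<in>medium_range \<alpha> k. Istar n k p j)"

definition S_j :: "nat \<Rightarrow> nat \<Rightarrow> (nat \<Rightarrow> real) \<Rightarrow> nat \<Rightarrow> real" where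
  "S_j n k p j = (\<Sum>i\<in>Istar n k p j. p i - real j / real k)"

definition m_j :: "nat \<Rightarrow> nat \<Rightarrow> (nat \<Rightarrow> real) \<Rightarrow> nat \<Rightarrow> int" where
  "m_j n k p j = \<lfloor>real k * S_j n k p j\<rfloor>"

text \<open>q is the medium-expectation rounding of p w.r.t. the enumerations enum j
  (enum j r = j_r, r = 1..n_j) of the sets I^*_j.\<close>
definition medium_rounding :: "real \<Rightarrow> nat \<Rightarrow> nat \<Rightarrow> (nat \<Rightarrow> real) \<Rightarrow> (nat \<Rightarrow> nat \<Rightarrow> nat)
    \<Rightarrow> (nat \<Rightarrow> real) \<Rightarrow> bool" where
  "medium_rounding \<alpha> n k p enum q \<longleftrightarrow>
     (\<forall>j\<in>medium_range \<alpha> k.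
        bij_betw (enum j) {1..card (Istar n k p j)} (Istar n k p j) \<and>
        (\<forall>r\<in>{1..card (Istar n k p j)}.
           q (enum j r) = (if int r \<le> m_j n k p j then real (j+1) / real k else real j / real k)))"

end

theory Submission
  imports Defs "HOL-Computational_Algebra.Polynomial"
begin

definition l1 :: "real poly \<Rightarrow> real" where
  "l1 p = (\<Sum>i\<le>degree p. \<bar>coeff p i\<bar>)"

lemma l1_eq_bound: "degree p \<le> N \<Longrightarrow> l1 p = (\<Sum>i\<le>N. \<bar>coeff p i\<bar>)"
  unfolding l1_def by (intro sum.mono_neutral_left) (auto simp: coeff_eq_0)

lemma l1_nonneg: "l1 p \<ge> 0" unfolding l1_def by (intro sum_nonneg) auto

lemma l1_0[simp]: "l1 0 = 0" by (simp add: l1_def)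

lemma l1_pCons: "l1 (pCons a p) = \<bar>a\<bar> + l1 p"
proof -
  have "l1 (pCons a p) = (\<Sum>i\<le>Suc (degree p). \<bar>coeff (pCons a p) i\<bar>)"
    by (rule l1_eq_bound) (simp add: degree_pCons_le)
  also have "\<dots> = \<bar>a\<bar> + (\<Sum>i\<le>degree p. \<bar>coeff p i\<bar>)"
    by (subst sum.atMost_Suc_shift) simp
  finally show ?thesis by (simp add: l1_def)
qed

lemma l1_add: "l1 (p + q) \<le> l1 p + l1 q"
proof -
  let ?N = "max (degree p) (degree q)"
  have "l1 (p+q) = (\<Sum>i\<le>?N. \<bar>coeff (p+q) i\<bar>)"
    by (rule l1_eq_bound) (simp add: degree_add_le)
  also have "\<dots> \<le> (\<Sum>i\<le>?N. \<bar>coeff p i\<bar> + \<bar>coeff q i\<bar>)"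
    by (intro sum_mono) (simp add: abs_triangle_ineq)
  also have "\<dots> = l1 p + l1 q"
    by (simp add: sum.distrib l1_eq_bound[of p ?N] l1_eq_bound[of q ?N])
  finally show ?thesis .
qed

lemma l1_smult: "l1 (smult c p) = \<bar>c\<bar> * l1 p"
proof -
  have "l1 (smult c p) = (\<Sum>i\<le>degree p. \<bar>coeff (smult c p) i\<bar>)"
    by (rule l1_eq_bound) (simp add: degree_smult_le)
  thus ?thesis by (simp add: l1_def sum_distrib_left abs_mult)
qed

lemma l1_uminus: "l1 (- p) = l1 p"
  using l1_smult[of "-1" p] by simp

lemma l1_diff: "l1 (p - q) \<le> l1 p + l1 q"
  using l1_add[of p "-q"] by (simp add: l1_uminus)

lemma l1_commute_diff: "l1 (p - q) = l1 (q - p)"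
  using l1_uminus[of "p - q"] by simp

lemma l1_mult: "l1 (p * q) \<le> l1 p * l1 q"
proof (induction p rule: pCons_induct)
  case 0 thus ?case by simp
next
  case (pCons a p)
  have "pCons a p * q = smult a q + pCons 0 (p * q)" by simp
  hence "l1 (pCons a p * q) \<le> l1 (smult a q) + l1 (pCons 0 (p*q))"
    by (metis l1_add)
  also have "\<dots> = \<bar>a\<bar> * l1 q + l1 (p*q)" by (simp add: l1_smult l1_pCons)
  also have "\<dots> \<le> \<bar>a\<bar> * l1 q + l1 p * l1 q" using pCons.IH by simp
  also have "\<dots> = l1 (pCons a p) * l1 q" by (simp add: l1_pCons algebra_simps)
  finally show ?case .
qed

lemma l1_mult_le1: "l1 q \<le> 1 \<Longrightarrow> l1 (p * q) \<le> l1 p"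
proof -
  assume "l1 q \<le> 1"
  hence "l1 p * l1 q \<le> l1 p" by (simp add: l1_nonneg mult_left_le)
  thus ?thesis using l1_mult[of p q] by linarith
qed

definition Bp :: "real \<Rightarrow> real poly" where "Bp r = [:1 - r, r:]"

lemma l1_Bp: "0 \<le> r \<Longrightarrow> r \<le> 1 \<Longrightarrow> l1 (Bp r) = 1"
  by (simp add: Bp_def l1_pCons)

lemma choose_odd: "(Suc (2*n) choose n) * (n+1) = (2*n+1) * ((2*n) choose n)"
proof -
  have "Suc (2*n) choose n = Suc (2*n) choose Suc n"
    using binomial_symmetric[of n "Suc (2*n)"] by (simp add: Suc_diff_le)
  moreover have "Suc n * (Suc (2*n) choose Suc n) = Suc (2*n) * ((2*n) choose n)"
    by (rule Suc_times_binomial)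
  ultimately show ?thesis by (simp add: algebra_simps)
qed

lemma choose_even_step: "(Suc (Suc (2*n)) choose Suc n) = 2 * (Suc (2*n) choose n)"
proof -
  have "Suc (2*n) choose Suc n = Suc (2*n) choose n"
    using binomial_symmetric[of n "Suc (2*n)"] by (simp add: Suc_diff_le)
  thus ?thesis by simp
qed

lemma central_sq: "real ((2*n) choose n) ^ 2 * (2*n+1) \<le> 16 ^ n"
proof (induction n)
  case 0 thus ?case by simp
next
  case (Suc n)
  define c where "c = real ((2*n) choose n)"
  have e1: "real (Suc (2*n) choose n) = (2*n+1) * c / (n+1)"
    using arg_cong[OF choose_odd[of n], of real] unfolding c_def
    by (simp add: field_simps)
  have "2 * Suc n = Suc (Suc (2*n))" by simp
  hence e2: "real ((2 * Suc n) choose Suc n) = 2 * (2*n+1) * c / (n+1)"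
    using choose_even_step[of n] e1 by simp
  have "real ((2 * Suc n) choose Suc n) ^ 2 * (2 * Suc n + 1)
      = c^2 * (2*real n+1) * (4 * (2*real n+1) * (2*real n+3) / (real n+1)^2)"
    unfolding e2 by (simp add: field_simps power2_eq_square)
  also have "4 * (2*real n+1) * (2*real n+3) / (real n+1)^2 \<le> 16"
  proof -
    have "(real n+1)^2 > 0" by simp
    moreover have "4 * (2*real n+1) * (2*real n+3) \<le> 16 * (real n+1)^2" by (simp add: power2_eq_square algebra_simps)
    ultimately show ?thesis by (simp add: divide_le_eq)
  qed
  hence "c^2 * (2*real n+1) * (4 * (2*real n+1) * (2*real n+3) / (real n+1)^2) \<le> c^2 * (2*real n+1) * 16"
    by (intro mult_left_mono) auto
  also have "\<dots> \<le> 16 ^ n * 16" using Suc.IH unfolding c_def by (simp add: algebra_simps)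
  finally show ?case by simp
qed

lemma sixteen: "(16::real)^n = (2^n)^4"
proof -
  have "(2::real)^4 = 16" by simp
  thus ?thesis by (metis power_mult mult.commute)
qed

lemma central_bound: "real (a choose (a div 2)) / 2 ^ a \<le> 1 / sqrt (a + 1)"
proof -
  obtain n where "a = 2*n \<or> a = 2*n+1" by (metis oddE evenE)
  then show ?thesis
  proof
    assume a: "a = 2*n"
    have "real ((2*n) choose n) ^ 2 * (2*n+1) \<le> 16 ^ n" by (rule central_sq)
    hence "(real ((2*n) choose n) / 2^(2*n)) ^ 2 \<le> 1 / (2*n+1)"
      by (simp add: field_simps power_mult power_divide sixteen)
    hence "real ((2*n) choose n) / 2^(2*n) \<le> sqrt (1 / (2*n+1))"
      using real_le_rsqrt by blast
    thus ?thesis using a by (simp add: real_sqrt_divide)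
  next
    assume a: "a = 2*n+1"
    define X where "X = real (Suc (2*n) choose n)"
    have h: "real ((2*(n+1)) choose (n+1)) ^ 2 * (2*(n+1)+1) \<le> 16 ^ (n+1)" by (rule central_sq)
    have eq: "real ((2*(n+1)) choose (n+1)) = 2 * X"
      unfolding X_def using choose_even_step[of n] by simp
    have h2: "4 * X^2 * (2*real n+3) \<le> 16 * 16^n"
      using h unfolding eq by (simp add: algebra_simps power2_eq_square)
    have p: "((2::real)^(2*n+1))^2 = 4 * 16^n"
    proof -
      have "((2::real)^(2*n+1))^2 = 4 * ((2^n)^2)^2" by (simp add: power_mult power_add power2_eq_square algebra_simps)
      also have "4 * (((2::real)^n)^2)^2 = 4 * (2^n)^4" by (simp add: power_mult[symmetric])
      finally show ?thesis by (simp add: sixteen)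
    qed
    have "(X / 2^(2*n+1)) ^ 2 = X^2 / (4 * 16^n)" by (simp only: power_divide p)
    also have "\<dots> \<le> 1 / (2*real n+3)" using h2 by (simp add: field_simps)
    also have "\<dots> \<le> 1 / (2*real n+2)" by (simp add: field_simps)
    finally have "X / 2^(2*n+1) \<le> sqrt (1 / (2*real n+2))"
      using real_le_rsqrt by blast
    moreover have "a div 2 = n" using a by simp
    ultimately show ?thesis using a unfolding X_def by (simp add: real_sqrt_divide add.commute)
  qed
qed

lemma coeff_11_power: "coeff ([:1,1:]^a) i = real (a choose i)"
proof (cases "i \<le> a")
  case True thus ?thesis by (simp add: coeff_linear_poly_power)
next
  case False
  hence "coeff ([:1,1:]^a) i = 0"
    by (intro coeff_eq_0) (metis degree_linear_power le_less_trans not_le)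
  thus ?thesis using False by (simp add: binomial_eq_0)
qed

lemma binom_up: "m \<le> a div 2 \<Longrightarrow>
  (\<Sum>i\<le>m. \<bar>real (a choose i) - (if i = 0 then 0 else real (a choose (i - 1)))\<bar>) = real (a choose m)"
proof (induction m)
  case 0 thus ?case by simp
next
  case (Suc m)
  have "a choose m \<le> a choose Suc m" using Suc.prems by (intro binomial_mono) auto
  thus ?case using Suc by simp
qed

lemma binom_step_down: "a div 2 \<le> i \<Longrightarrow> a choose Suc i \<le> a choose i"
proof (cases "Suc i \<le> a")
  case True
  assume "a div 2 \<le> i" thus ?thesis using True by (intro binomial_antimono) auto
qed (simp add: binomial_eq_0)

lemma binom_down: "a div 2 \<le> m \<Longrightarrow>
  (\<Sum>i\<in>{a div 2<..Suc m}. \<bar>real (a choose i) - (if i = 0 then 0 else real (a choose (i - 1)))\<bar>)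
    = real (a choose (a div 2)) - real (a choose Suc m)"
proof (induction m rule: dec_induct)
  case base
  have "{a div 2<..Suc (a div 2)} = {Suc (a div 2)}" by auto
  thus ?case using binom_step_down[of a "a div 2"] by simp
next
  case (step m)
  have "{a div 2<..Suc (Suc m)} = insert (Suc (Suc m)) {a div 2<..Suc m}" using step.hyps by auto
  moreover have "a choose Suc (Suc m) \<le> a choose Suc m" using step by (intro binom_step_down) auto
  ultimately show ?case using step by (simp add: of_nat_diff)
qed

lemma phi_exact: "l1 ([:1,-1:] * [:1/2,1/2:]^a) = 2 * real (a choose (a div 2)) / 2^a"
proof -
  define P where "P = ([:1,1:]^a :: real poly)"
  have H: "[:1/2,1/2:]^a = smult ((1/2)^a) P"
    unfolding P_def by (metis smult_power smult_pCons smult_0_right smult_1_left mult.right_neutral pCons_0_0 times_divide_eq_right)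
  have D: "[:1,-1:] * P = P - pCons 0 P" by simp
  have degP: "degree P \<le> a" unfolding P_def by (simp add: degree_linear_power)
  have "l1 ([:1,-1:] * P) = (\<Sum>i\<le>a+1. \<bar>coeff ([:1,-1:] * P) i\<bar>)"
    by (rule l1_eq_bound) (metis D degP degree_diff_le degree_pCons_le le_SucI le_trans Suc_eq_plus1 Suc_le_mono)
  also have "\<dots> = (\<Sum>i\<le>a+1. \<bar>real (a choose i) - (if i = 0 then 0 else real (a choose (i - 1)))\<bar>)"
    unfolding D by (intro sum.cong refl) (auto simp: P_def coeff_11_power coeff_pCons')
  also have "{..a+1} = {..a div 2} \<union> {a div 2<..Suc a}" by auto
  also have "(\<Sum>i\<in>{..a div 2} \<union> {a div 2<..Suc a}. \<bar>real (a choose i) - (if i = 0 then 0 else real (a choose (i - 1)))\<bar>)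
     = (\<Sum>i\<le>a div 2. \<bar>real (a choose i) - (if i = 0 then 0 else real (a choose (i - 1)))\<bar>)
      + (\<Sum>i\<in>{a div 2<..Suc a}. \<bar>real (a choose i) - (if i = 0 then 0 else real (a choose (i - 1)))\<bar>)"
    by (intro sum.union_disjoint) auto
  also have "\<dots> = 2 * real (a choose (a div 2))"
    using binom_up[of "a div 2" a] binom_down[of a a] by simp
  finally have "l1 ([:1,-1:] * P) = 2 * real (a choose (a div 2))" .
  moreover have "[:1,-1:] * [:1/2,1/2:]^a = smult ((1/2)^a) ([:1,-1:] * P)" unfolding H by simp
  ultimately show ?thesis by (simp add: l1_smult power_divide)
qed

lemma phi_bound: "l1 ([:1,-1:] * [:1/2,1/2:]^a) \<le> 2 / sqrt (a + 1)"
  using central_bound[of a] unfolding phi_exact by simp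

lemma sqrt_concave2:
  assumes "0 \<le> s" "s \<le> 1" "0 \<le> u" "0 \<le> v"
  shows "(1-s) * sqrt u + s * sqrt v \<le> sqrt ((1-s)*u + s * v)"
proof (rule real_le_rsqrt)
  have key: "((1-s)*a + s*b)^2 \<le> (1-s)*a^2 + s*b^2" for a b :: real
  proof -
    have "(1-s)*a^2 + s*b^2 - ((1-s)*a + s*b)^2 = s*(1-s)*(a-b)^2"
      by (simp add: power2_eq_square algebra_simps)
    moreover have "s*(1-s)*(a-b)^2 \<ge> 0" using assms by simp
    ultimately show ?thesis by linarith
  qed
  show "((1-s) * sqrt u + s * sqrt v)^2 \<le> (1-s)*u + s * v"
    using key[of "sqrt u" "sqrt v"] assms by simp
qed

definition Hp :: "real poly" where "Hp = [:1/2, 1/2:]"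
definition Dp :: "real poly" where "Dp = [:1, -1:]"

lemma Bp_decomp:
  assumes "0 < c" "c < 1/2" "c \<le> r" "r \<le> 1 - c"
  shows "Bp r = smult (1 - 2*c) (Bp ((r - c) / (1 - 2*c))) + smult (2*c) Hp"
  using assms by (simp add: Bp_def Hp_def field_simps)

definition binW :: "real \<Rightarrow> nat \<Rightarrow> nat \<Rightarrow> real" where
  "binW s L j = real (L choose j) * s^j * (1-s)^(L-j)"

lemma binW_step: "j \<le> L \<Longrightarrow> binW s (Suc L) (Suc j) = s * binW s L j + (1-s) * binW s L (Suc j)"
proof -
  assume j: "j \<le> L"
  show ?thesis
  proof (cases "j = L")
    case True thus ?thesis by (simp add: binW_def)
  next
    case False
    hence "L - j = Suc (L - Suc j)" using j by simp
    thus ?thesis unfolding binW_def by (simp add: algebra_simps)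
  qed
qed

lemma binW_out: "binW s L (Suc L) = 0" by (simp add: binW_def)

lemma pascal_sum:
  "(\<Sum>j\<le>Suc L. binW s (Suc L) j * g j)
     = (1-s) * (\<Sum>j\<le>L. binW s L j * g j) + s * (\<Sum>j\<le>L. binW s L j * g (Suc j))"
proof -
  have A0: "(\<Sum>j\<le>Suc L. binW s (Suc L) j * g j) = binW s (Suc L) 0 * g 0 + (\<Sum>j\<le>L. binW s (Suc L) (Suc j) * g (Suc j))"
    by (subst sum.atMost_Suc_shift) simp
  have A1: "(\<Sum>j\<le>L. binW s (Suc L) (Suc j) * g (Suc j))
        = (\<Sum>j\<le>L. s * (binW s L j * g (Suc j)) + (1-s) * (binW s L (Suc j) * g (Suc j)))"
    by (intro sum.cong refl) (simp add: binW_step algebra_simps)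
  have B0: "(\<Sum>j\<le>L. binW s L j * g j) = (\<Sum>j\<le>Suc L. binW s L j * g j)"
    by (simp add: binW_out)
  have B1: "(\<Sum>j\<le>Suc L. binW s L j * g j) = binW s L 0 * g 0 + (\<Sum>j\<le>L. binW s L (Suc j) * g (Suc j))"
    by (subst sum.atMost_Suc_shift) simp
  have W0: "binW s (Suc L) 0 = (1-s) * binW s L 0" by (simp add: binW_def)
  have A2: "(\<Sum>j\<le>L. s * (binW s L j * g (Suc j)) + (1-s) * (binW s L (Suc j) * g (Suc j)))
     = s * (\<Sum>j\<le>L. binW s L j * g (Suc j)) + (1-s) * (\<Sum>j\<le>L. binW s L (Suc j) * g (Suc j))"
    by (simp add: sum.distrib sum_distrib_left)
  show ?thesis unfolding A0 A1 A2 B0 B1 W0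
    by (simp add: algebra_simps)
qed

lemma core_gen:
  fixes c :: real and a :: nat
  assumes "finite S" "0 < c" "c < 1/2" "\<forall>i\<in>S. c \<le> f i \<and> f i \<le> 1 - c"
  shows "l1 (Dp * (\<Prod>i\<in>S. Bp (f i)) * Hp^a)
     \<le> (\<Sum>j\<le>card S. binW (2*c) (card S) j * (2 / sqrt (real j + real a + 1)))"
  using assms(1,4)
proof (induction S arbitrary: a rule: finite_induct)
  case empty
  have "l1 (Dp * Hp^a) \<le> 2 / sqrt (a + 1)" unfolding Dp_def Hp_def by (rule phi_bound)
  thus ?case by (simp add: binW_def add.commute)
next
  case (insert j S)
  define s where "s = 2*c"
  have s: "0 < s" "s < 1" using assms unfolding s_def by auto
  define r' where "r' = (f j - c) / (1 - 2*c)"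
  have r': "0 \<le> r'" "r' \<le> 1" using insert.prems assms unfolding r'_def by (auto simp: field_simps)
  define Q where "Q = (\<Prod>i\<in>S. Bp (f i))"
  have "Dp * (\<Prod>i\<in>insert j S. Bp (f i)) * Hp^a = Dp * (Bp (f j) * Q) * Hp^a"
    using insert by (simp add: Q_def)
  also have "\<dots> = smult (1-s) (Bp r' * (Dp * Q * Hp^a)) + smult s (Dp * Q * Hp^(Suc a))"
    using Bp_decomp[of c "f j"] assms insert.prems
    unfolding s_def r'_def by (simp add: algebra_simps)
  finally have eq: "Dp * (\<Prod>i\<in>insert j S. Bp (f i)) * Hp^a = \<dots>" .
  define L where "L = card S"
  have IH1: "l1 (Dp * Q * Hp^a) \<le> (\<Sum>i\<le>L. binW s L i * (2 / sqrt (real i + real a + 1)))"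
    using insert.IH[of a] insert.prems unfolding Q_def L_def s_def by auto
  have IH2: "l1 (Dp * Q * Hp^(Suc a)) \<le> (\<Sum>i\<le>L. binW s L i * (2 / sqrt (real (Suc i) + real a + 1)))"
    using insert.IH[of "Suc a"] insert.prems unfolding Q_def L_def s_def by (auto simp: algebra_simps)
  have "l1 (Dp * (\<Prod>i\<in>insert j S. Bp (f i)) * Hp^a)
      \<le> l1 (smult (1-s) (Bp r' * (Dp * Q * Hp^a))) + l1 (smult s (Dp * Q * Hp^(Suc a)))"
    unfolding eq by (rule l1_add)
  also have "\<dots> = (1-s) * l1 (Bp r' * (Dp * Q * Hp^a)) + s * l1 (Dp * Q * Hp^(Suc a))"
    using s by (simp add: l1_smult)
  also have "l1 (Bp r' * (Dp * Q * Hp^a)) \<le> l1 (Dp * Q * Hp^a)"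
    using l1_mult_le1[of "Bp r'" "Dp * Q * Hp^a"] l1_Bp[OF r'] by (simp add: mult.commute)
  hence "(1-s) * l1 (Bp r' * (Dp * Q * Hp^a)) \<le> (1-s) * (\<Sum>i\<le>L. binW s L i * (2 / sqrt (real i + real a + 1)))"
    using IH1 s by (intro mult_left_mono) auto
  hence "(1-s) * l1 (Bp r' * (Dp * Q * Hp^a)) + s * l1 (Dp * Q * Hp^(Suc a))
      \<le> (1-s) * (\<Sum>i\<le>L. binW s L i * (2 / sqrt (real i + real a + 1)))
        + s * (\<Sum>i\<le>L. binW s L i * (2 / sqrt (real (Suc i) + real a + 1)))"
    using IH2 s by (intro add_mono mult_left_mono) auto
  also have "\<dots> = (\<Sum>i\<le>Suc L. binW s (Suc L) i * (2 / sqrt (real i + real a + 1)))"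
    by (rule pascal_sum[symmetric])
  also have "Suc L = card (insert j S)" using insert unfolding L_def by simp
  finally show ?case unfolding s_def .
qed

lemma weighted_cs:
  fixes w x :: "nat \<Rightarrow> real"
  assumes "\<forall>j\<in>A. w j \<ge> 0" "(\<Sum>j\<in>A. w j) = 1"
  shows "(\<Sum>j\<in>A. w j * x j)^2 \<le> (\<Sum>j\<in>A. w j * (x j)^2)"
proof -
  define m where "m = (\<Sum>j\<in>A. w j * x j)"
  have "0 \<le> (\<Sum>j\<in>A. w j * (x j - m)^2)" using assms by (intro sum_nonneg) auto
  also have "\<dots> = (\<Sum>j\<in>A. w j * (x j)^2) - 2 * m * (\<Sum>j\<in>A. w j * x j) + m^2 * (\<Sum>j\<in>A. w j)"
    by (simp add: power2_eq_square algebra_simps sum.distrib sum_subtractf sum_distrib_left)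
  finally show ?thesis using assms unfolding m_def by (simp add: power2_eq_square)
qed

lemma binW_nonneg: "0 \<le> s \<Longrightarrow> s \<le> 1 \<Longrightarrow> binW s L j \<ge> 0" by (simp add: binW_def)

lemma binW_sum: "(\<Sum>j\<le>L. binW s L j) = 1"
  using binomial_ring[of s "1-s" L] by (simp add: binW_def)

lemma binW_inv: assumes "0 < s" "s \<le> 1"
  shows "(\<Sum>j\<le>L. binW s L j * (1 / (real j + 1))) \<le> 1 / (s * (L+1))"
proof -
  have "(\<Sum>j\<le>L. binW s L j * (1 / (real j + 1))) = (\<Sum>j\<le>L. binW s (Suc L) (Suc j)) / (s * (L+1))"
  proof -
    have "binW s L j * (1 / (real j + 1)) = binW s (Suc L) (Suc j) / (s * (L+1))" if "j \<le> L" for j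
    proof -
      have e: "real (Suc L choose Suc j) * (real j + 1) = (real L + 1) * real (L choose j)"
        using arg_cong[OF Suc_times_binomial[of j L], of real] by (simp add: algebra_simps)
      have w0: "binW s (Suc L) (Suc j) = real (Suc L choose Suc j) * s^(Suc j) * (1-s)^(L-j)"
        unfolding binW_def by (simp del: binomial_Suc_Suc)
      have e2: "real (Suc L choose Suc j) = (real L + 1) * real (L choose j) / (real j + 1)"
        using e by (simp add: field_simps del: binomial_Suc_Suc)
      have w1: "binW s (Suc L) (Suc j) = ((real L + 1) * real (L choose j) / (real j + 1)) * s^(Suc j) * (1-s)^(L-j)"
        unfolding w0 e2 ..
      define X where "X = real (L choose j) * (s^j * (1-s)^(L-j))"
      have lhs: "binW s L j * (1 / (real j + 1)) = X / (real j + 1)" unfolding binW_def X_def by (simp add: algebra_simps)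
      have "((real L + 1) * real (L choose j) / (real j + 1)) * s^(Suc j) * (1-s)^(L-j)
           = (X / (real j+1)) * (s*(real L+1))"
        unfolding X_def by (simp add: algebra_simps)
      moreover have "s*(real L+1) \<noteq> 0" using assms by simp
      ultimately have "binW s (Suc L) (Suc j) / (s * (real L+1)) = X / (real j + 1)" unfolding w1 by simp
      thus ?thesis using lhs by (simp add: add.commute)
    qed
    thus ?thesis by (simp add: sum_divide_distrib)
  qed
  also have "(\<Sum>j\<le>L. binW s (Suc L) (Suc j)) \<le> (\<Sum>j\<le>Suc L. binW s (Suc L) j)"
  proof -
    have "(\<Sum>j\<le>Suc L. binW s (Suc L) j) = binW s (Suc L) 0 + (\<Sum>j\<le>L. binW s (Suc L) (Suc j))"
      by (rule sum.atMost_Suc_shift)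
    moreover have "binW s (Suc L) 0 \<ge> 0" using assms by (simp add: binW_nonneg)
    ultimately show ?thesis by simp
  qed
  also have "\<dots> = 1" by (rule binW_sum)
  finally show ?thesis using assms by (simp add: divide_right_mono)
qed

lemma binW_sqrt: assumes "0 < s" "s \<le> 1"
  shows "(\<Sum>j\<le>L. binW s L j * (2 / sqrt (real j + 1))) \<le> 2 * sqrt (1 / (s * (L+1)))"
proof -
  have "(\<Sum>j\<le>L. binW s L j * (1 / sqrt (real j + 1)))^2 \<le> (\<Sum>j\<le>L. binW s L j * (1 / sqrt (real j + 1))^2)"
    using assms by (intro weighted_cs) (auto simp: binW_nonneg binW_sum)
  also have "\<dots> = (\<Sum>j\<le>L. binW s L j * (1 / (real j + 1)))"
    by (intro sum.cong refl) (simp add: power_divide)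
  also have "\<dots> \<le> 1 / (s * (L+1))" by (rule binW_inv[OF assms])
  finally have "(\<Sum>j\<le>L. binW s L j * (1 / sqrt (real j + 1))) \<le> sqrt (1 / (s * (L+1)))"
    using real_le_rsqrt by blast
  hence "2 * (\<Sum>j\<le>L. binW s L j * (1 / sqrt (real j + 1))) \<le> 2 * sqrt (1 / (s * (L+1)))" by simp
  thus ?thesis by (simp add: sum_distrib_left algebra_simps)
qed

lemma core1:
  assumes "finite S" "0 < c" "c < 1/2" "\<forall>i\<in>S. c \<le> f i \<and> f i \<le> 1 - c"
  shows "l1 (Dp * (\<Prod>i\<in>S. Bp (f i))) \<le> 2 * sqrt (1 / (2*c*(card S + 1)))"
  using core_gen[OF assms, of 0] binW_sqrt[of "2*c" "card S"] assms by simp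

lemma core2:
  assumes "finite S" "0 < c" "c < 1/2" "\<forall>i\<in>S. c \<le> f i \<and> f i \<le> 1 - c"
  shows "l1 (Dp * Dp * (\<Prod>i\<in>S. Bp (f i))) \<le> 4 / (2*c*(card S div 2 + 1))"
proof -
  obtain T where T: "T \<subseteq> S" "card T = card S div 2"
    using obtain_subset_with_card_n[of "card S div 2" S] by auto
  have fT: "finite T" "finite (S - T)" using T assms by (auto intro: finite_subset)
  have cT: "card (S - T) \<ge> card S div 2" using T assms by (simp add: card_Diff_subset fT)
  have split: "(\<Prod>i\<in>S. Bp (f i)) = (\<Prod>i\<in>T. Bp (f i)) * (\<Prod>i\<in>S-T. Bp (f i))"
    using prod.subset_diff[OF T(1) assms(1), of "\<lambda>i. Bp (f i)"] by (simp add: mult.commute)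
  have eqs: "Dp * Dp * (\<Prod>i\<in>S. Bp (f i)) = (Dp * (\<Prod>i\<in>T. Bp (f i))) * (Dp * (\<Prod>i\<in>S-T. Bp (f i)))"
    unfolding split by (simp add: algebra_simps)
  have "l1 (Dp * Dp * (\<Prod>i\<in>S. Bp (f i))) \<le> l1 (Dp * (\<Prod>i\<in>T. Bp (f i))) * l1 (Dp * (\<Prod>i\<in>S-T. Bp (f i)))"
    unfolding eqs by (rule l1_mult)
  also have "\<dots> \<le> (2 * sqrt (1 / (2*c*(card T + 1)))) * (2 * sqrt (1 / (2*c*(card (S-T) + 1))))"
    using core1[OF fT(1) assms(2,3), of f] core1[OF fT(2) assms(2,3), of f] assms T
    by (intro mult_mono) (auto simp: l1_nonneg)
  also have "\<dots> \<le> (2 * sqrt (1 / (2*c*(card S div 2 + 1)))) * (2 * sqrt (1 / (2*c*(card S div 2 + 1))))"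
  proof -
    have d: "sqrt (1 / (2*c*real (x + 1))) \<le> sqrt (1 / (2*c*real (card S div 2 + 1)))"
      if "x \<ge> card S div 2" for x
      using that assms by (intro real_sqrt_le_mono divide_left_mono mult_left_mono mult_pos_pos) auto
    show ?thesis using d[of "card T"] d[of "card (S-T)"] T cT assms by (intro mult_mono) auto
  qed
  also have "\<dots> = 4 * (sqrt (1 / (2*c*(card S div 2 + 1))) * sqrt (1 / (2*c*(card S div 2 + 1))))"
    by simp
  also have "\<dots> = 4 / (2*c*(card S div 2 + 1))"
    using assms by (subst real_sqrt_mult_self) auto
  finally show ?thesis .
qed

lemma move_eq: "a + p = u + v \<Longrightarrow> Bp a * Bp p - Bp u * Bp v = smult (a*p - u * v) (Dp*Dp)"
  by (simp add: Bp_def Dp_def algebra_simps)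

lemma move_e:
  fixes a p u v lo h :: real
  assumes "lo \<le> a" "a \<le> lo + h" "lo \<le> p" "p \<le> lo + h" "lo \<le> u" "u \<le> lo + h"
    "lo \<le> v" "v \<le> lo + h" "a + p = u + v"
  shows "\<bar>a*p - u * v\<bar> \<le> h^2"
proof -
  define x y x' y' where "x = a - lo" "y = p - lo" "x' = u - lo" "y' = v - lo"
  have e0: "x*y - x'*y' = a*p - u * v - lo*((a+p) - (u+v))" unfolding x_y_x'_y'_def
    by (simp add: left_diff_distrib right_diff_distrib distrib_left)
  have e: "a*p - u * v = x*y - x'*y'" using assms(9) e0 by simp
  have "0 \<le> x*y" "x*y \<le> h*h" "0 \<le> x'*y'" "x'*y' \<le> h*h"
    using assms unfolding x_y_x'_y'_def by (auto intro!: mult_mono)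
  thus ?thesis unfolding e by (simp add: power2_eq_square abs_le_iff)
qed

definition PB :: "real list \<Rightarrow> real poly" where "PB xs = prod_list (map Bp xs)"

lemma PB_Cons[simp]: "PB (x#xs) = Bp x * PB xs" by (simp add: PB_def)
lemma PB_Nil[simp]: "PB [] = 1" by (simp add: PB_def)
lemma PB_append: "PB (xs @ ys) = PB xs * PB ys" by (simp add: PB_def)
lemma PB_replicate: "PB (replicate n x) = Bp x ^ n" by (simp add: PB_def)

lemma carry:
  fixes lo h :: real and Z0 :: "real poly"
  assumes h: "h > 0"
  and H2: "\<forall>us. (\<forall>u\<in>set us. lo \<le> u \<and> u \<le> lo + h) \<longrightarrow> length us + 2 = N
              \<longrightarrow> l1 (Dp * Dp * Z0 * PB us) \<le> \<Phi>2"
  shows "\<forall>os a. (\<forall>u\<in>set (os @ a # ps). lo \<le> u \<and> u \<le> lo + h) \<longrightarrow> length os + length ps + 1 = N \<longrightarrow>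
     (\<exists>g b. lo \<le> b \<and> b \<le> lo + h \<and> g \<le> length ps \<and>
        real g * h + (b - lo) = (a - lo) + sum_list (map (\<lambda>x. x - lo) ps) \<and>
        l1 (Z0 * PB os * (Bp a * PB ps - Bp (lo+h) ^ g * Bp lo ^ (length ps - g) * Bp b))
          \<le> real (length ps) * h^2 * \<Phi>2)"
proof (induction ps)
  case Nil
  show ?case
  proof (intro allI impI)
    fix os a assume "\<forall>u\<in>set (os @ a # []). lo \<le> u \<and> u \<le> lo + h"
    thus "\<exists>g b. lo \<le> b \<and> b \<le> lo + h \<and> g \<le> length [] \<and>
        real g * h + (b - lo) = (a - lo) + sum_list (map (\<lambda>x. x - lo) []) \<and>
        l1 (Z0 * PB os * (Bp a * PB [] - Bp (lo+h) ^ g * Bp lo ^ (length [] - g) * Bp b))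
          \<le> real (length []) * h^2 * \<Phi>2"
      by (intro exI[of _ 0] exI[of _ a]) auto
  qed
next
  case (Cons p ps)
  show ?case
  proof (intro allI impI)
    fix os a
    assume rng: "\<forall>u\<in>set (os @ a # p # ps). lo \<le> u \<and> u \<le> lo + h"
      and len: "length os + length (p # ps) + 1 = N"
    have a: "lo \<le> a" "a \<le> lo + h" and pp: "lo \<le> p" "p \<le> lo + h" using rng by auto
    define out where "out = (if (a - lo) + (p - lo) \<ge> h then lo + h else lo)"
    define a' where "a' = a + p - out"
    have o: "lo \<le> out" "out \<le> lo + h" using h unfolding out_def by auto
    have a': "lo \<le> a'" "a' \<le> lo + h" using a pp unfolding a'_def out_def by auto
    have sum: "a + p = out + a'" unfolding a'_def by simp
    have rng': "\<forall>u\<in>set ((out # os) @ a' # ps). lo \<le> u \<and> u \<le> lo + h" using rng o a' by auto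
    have len': "length (out # os) + length ps + 1 = N" using len by simp
    obtain g b where gb: "lo \<le> b" "b \<le> lo + h" "g \<le> length ps"
        "real g * h + (b - lo) = (a' - lo) + sum_list (map (\<lambda>x. x - lo) ps)"
        "l1 (Z0 * PB (out # os) * (Bp a' * PB ps - Bp (lo+h) ^ g * Bp lo ^ (length ps - g) * Bp b))
          \<le> real (length ps) * h^2 * \<Phi>2"
      using Cons.IH rng' len' by blast
    define g' where "g' = (if out = lo + h then Suc g else g)"
    have g'le: "g' \<le> length (p # ps)" using gb unfolding g'_def by auto
    have tgt: "Bp out * (Bp (lo+h) ^ g * Bp lo ^ (length ps - g))
             = Bp (lo+h) ^ g' * Bp lo ^ (length (p # ps) - g')"
    proof (cases "out = lo + h")
      case True thus ?thesis using gb unfolding g'_def by (simp add: Suc_diff_le algebra_simps)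
    next
      case False
      hence "out = lo" unfolding out_def by (auto split: if_splits)
      thus ?thesis using False gb unfolding g'_def by (simp add: Suc_diff_le algebra_simps)
    qed
    have sumeq: "real g' * h + (b - lo) = (a - lo) + sum_list (map (\<lambda>x. x - lo) (p # ps))"
    proof (cases "out = lo + h")
      case True thus ?thesis using gb(4) unfolding g'_def a'_def by (simp add: algebra_simps)
    next
      case False
      hence "out = lo" unfolding out_def by (auto split: if_splits)
      thus ?thesis using False gb(4) unfolding g'_def a'_def by (simp add: algebra_simps)
    qed
    define e where "e = a*p - out*a'"
    have e: "\<bar>e\<bar> \<le> h^2" unfolding e_def by (rule move_e) (use a pp o a' sum in auto)
    have decomp: "Z0 * PB os * (Bp a * PB (p # ps) - Bp (lo+h) ^ g' * Bp lo ^ (length (p # ps) - g') * Bp b)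
      = smult e (Dp * Dp * Z0 * PB (os @ ps))
        + Z0 * PB (out # os) * (Bp a' * PB ps - Bp (lo+h) ^ g * Bp lo ^ (length ps - g) * Bp b)"
    proof -
      have m: "Bp a * Bp p = Bp out * Bp a' + smult e (Dp*Dp)"
        using move_eq[OF sum] unfolding e_def by (simp add: algebra_simps)
      define T where "T = Bp (lo+h) ^ g * Bp lo ^ (length ps - g) * Bp b"
      have "Z0 * PB os * (Bp a * PB (p # ps) - Bp out * T)
          = Z0 * PB os * ((Bp a * Bp p) * PB ps - Bp out * T)" by (simp add: mult.assoc)
      also have "\<dots> = Z0 * PB os * ((Bp out * Bp a' + smult e (Dp*Dp)) * PB ps - Bp out * T)"
        unfolding m ..
      also have "\<dots> = smult e (Dp * Dp * Z0 * PB (os @ ps)) + Z0 * PB (out # os) * (Bp a' * PB ps - T)"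
        by (simp add: PB_append algebra_simps)
      finally show ?thesis unfolding T_def tgt[symmetric] by (simp add: mult.assoc)
    qed
    have c1: "l1 (Dp * Dp * Z0 * PB (os @ ps)) \<le> \<Phi>2"
      using H2 rng len by auto
    have "l1 (Z0 * PB os * (Bp a * PB (p # ps) - Bp (lo+h) ^ g' * Bp lo ^ (length (p # ps) - g') * Bp b))
       \<le> \<bar>e\<bar> * l1 (Dp * Dp * Z0 * PB (os @ ps)) + real (length ps) * h^2 * \<Phi>2"
      unfolding decomp using l1_add[of "smult e _"] gb(5) by (simp add: l1_smult) (smt (verit))
    also have "\<bar>e\<bar> * l1 (Dp * Dp * Z0 * PB (os @ ps)) \<le> h^2 * \<Phi>2"
      using e c1 by (intro mult_mono) (auto simp: l1_nonneg)
    hence "\<bar>e\<bar> * l1 (Dp * Dp * Z0 * PB (os @ ps)) + real (length ps) * h^2 * \<Phi>2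
        \<le> real (length (p # ps)) * h^2 * \<Phi>2" by (simp add: algebra_simps)
    finally show "\<exists>g b. lo \<le> b \<and> b \<le> lo + h \<and> g \<le> length (p # ps) \<and>
        real g * h + (b - lo) = (a - lo) + sum_list (map (\<lambda>x. x - lo) (p # ps)) \<and>
        l1 (Z0 * PB os * (Bp a * PB (p # ps) - Bp (lo+h) ^ g * Bp lo ^ (length (p # ps) - g) * Bp b))
          \<le> real (length (p # ps)) * h^2 * \<Phi>2"
      using gb g'le sumeq by blast
  qed
qed

lemma bucket:
  fixes lo h :: real and Z0 :: "real poly"
  assumes h: "h > 0" and ne: "ps \<noteq> []" and rng: "\<forall>u\<in>set ps. lo \<le> u \<and> u \<le> lo + h"
  and N: "N = length ps"
  and H2: "\<forall>us. (\<forall>u\<in>set us. lo \<le> u \<and> u \<le> lo + h) \<longrightarrow> length us + 2 = N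
              \<longrightarrow> l1 (Dp * Dp * Z0 * PB us) \<le> \<Phi>2"
  and H1: "\<forall>us. (\<forall>u\<in>set us. lo \<le> u \<and> u \<le> lo + h) \<longrightarrow> length us + 1 = N
              \<longrightarrow> l1 (Dp * Z0 * PB us) \<le> \<Phi>1"
  and m: "m = nat \<lfloor>sum_list (map (\<lambda>x. x - lo) ps) / h\<rfloor>"
  shows "m \<le> N \<and> l1 (Z0 * (PB ps - Bp (lo+h) ^ m * Bp lo ^ (N - m))) \<le> real (N - 1) * h^2 * \<Phi>2 + h * \<Phi>1"
proof -
  obtain p1 rest where ps: "ps = p1 # rest" using ne by (cases ps) auto
  have "\<exists>g b. lo \<le> b \<and> b \<le> lo + h \<and> g \<le> length rest \<and>
        real g * h + (b - lo) = (p1 - lo) + sum_list (map (\<lambda>x. x - lo) rest) \<and>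
        l1 (Z0 * PB [] * (Bp p1 * PB rest - Bp (lo+h) ^ g * Bp lo ^ (length rest - g) * Bp b))
          \<le> real (length rest) * h^2 * \<Phi>2"
    using carry[OF h H2, of rest] rng N ps by auto
  then obtain g b where gb: "lo \<le> b" "b \<le> lo + h" "g \<le> length rest"
    "real g * h + (b - lo) = (p1 - lo) + sum_list (map (\<lambda>x. x - lo) rest)"
    "l1 (Z0 * (PB ps - Bp (lo+h) ^ g * Bp lo ^ (length rest - g) * Bp b))
          \<le> real (length rest) * h^2 * \<Phi>2"
    unfolding ps by auto
  have T: "sum_list (map (\<lambda>x. x - lo) ps) / h = real g + (b - lo) / h"
    using gb(4) h unfolding ps by (simp add: field_simps)
  have lenr: "length rest = N - 1" "N \<ge> 1" using N ps by auto
  have Phi1: "\<Phi>1 \<ge> 0"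
  proof -
    have "l1 (Dp * Z0 * PB (replicate (N-1) lo)) \<le> \<Phi>1" using H1 h lenr by auto
    thus ?thesis using l1_nonneg order_trans by blast
  qed
  show ?thesis
  proof (cases "b = lo + h")
    case True
    have "sum_list (map (\<lambda>x. x - lo) ps) / h = real (Suc g)" using T True h by simp
    moreover have "\<lfloor>real (Suc g)\<rfloor> = int (Suc g)" by (rule floor_of_nat)
    ultimately have mg: "m = Suc g" unfolding m by simp
    have eqT: "Bp (lo+h) ^ g * Bp lo ^ (length rest - g) * Bp b = Bp (lo+h) ^ m * Bp lo ^ (N - m)"
    proof -
      have "N - m = length rest - g" using mg lenr gb(3) by simp
      thus ?thesis using True mg by (simp add: mult_ac)
    qed
    have c: "l1 (Z0 * (PB ps - Bp (lo+h) ^ m * Bp lo ^ (N - m))) \<le> real (length rest) * h^2 * \<Phi>2"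
      using gb(5) unfolding eqT .
    moreover have "real (length rest) * h^2 * \<Phi>2 \<le> real (N - 1) * h^2 * \<Phi>2 + h * \<Phi>1"
      using lenr Phi1 h by simp
    moreover have "m \<le> N" using mg gb(3) lenr by simp
    ultimately show ?thesis by linarith
  next
    case False
    hence bl: "0 \<le> (b - lo) / h" "(b - lo) / h < 1" using gb h by auto
    have "\<lfloor>sum_list (map (\<lambda>x. x - lo) ps) / h\<rfloor> = int g"
      unfolding T using bl by (simp add: floor_eq_iff)
    hence mg: "m = g" unfolding m by simp
    have Ng: "N - g = Suc (length rest - g)" using lenr gb(3) by simp
    define Y where "Y = Bp (lo+h) ^ g * Bp lo ^ (length rest - g)"
    have bb: "Bp b = Bp lo + smult (lo - b) Dp" by (simp add: Bp_def Dp_def)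
    have Yr: "Y = PB (replicate g (lo+h) @ replicate (length rest - g) lo)"
      unfolding Y_def by (simp add: PB_append PB_replicate)
    have "Z0 * (PB ps - Bp (lo+h) ^ m * Bp lo ^ (N - m)) = Z0 * (PB ps - Y * Bp lo)"
      unfolding mg Ng Y_def by (simp add: mult_ac)
    also have "\<dots> = Z0 * (PB ps - Y * Bp b) + Z0 * Y * (Bp b - Bp lo)"
      by (simp add: algebra_simps)
    also have "Z0 * Y * (Bp b - Bp lo) = smult (lo - b) (Dp * Z0 * Y)"
      unfolding bb by (simp add: mult_ac)
    finally have split: "Z0 * (PB ps - Bp (lo+h) ^ m * Bp lo ^ (N - m))
      = Z0 * (PB ps - Bp (lo+h) ^ g * Bp lo ^ (length rest - g) * Bp b)
        + smult (lo - b) (Dp * Z0 * PB (replicate g (lo+h) @ replicate (length rest - g) lo))"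
      unfolding Yr[symmetric] Y_def .
    have c: "l1 (Dp * Z0 * PB (replicate g (lo+h) @ replicate (length rest - g) lo)) \<le> \<Phi>1"
      by (rule H1[rule_format]) (use h lenr gb(3) in auto)
    have "l1 (Z0 * (PB ps - Bp (lo+h) ^ m * Bp lo ^ (N - m)))
        \<le> real (length rest) * h^2 * \<Phi>2 + (b - lo) * \<Phi>1"
      unfolding split using l1_add gb(5) c gb(1) l1_smult[of "lo - b"]
      by (smt (verit, ccfv_SIG) mult_left_mono)
    also have "(b - lo) * \<Phi>1 \<le> h * \<Phi>1" using gb Phi1 by (intro mult_right_mono) auto
    finally show ?thesis using mg gb(3) lenr by auto
  qed
qed

lemma card_upd: "finite A \<Longrightarrow> a \<notin> A \<Longrightarrow>
  card {i\<in>insert a A. (f(a:=y)) i} = (if y then 1 else 0) + card {i\<in>A. f i}"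
proof -
  assume fA: "finite A" and a: "a \<notin> A"
  have e: "{i\<in>A. (f(a:=y)) i} = {i\<in>A. f i}" using a by auto
  show ?thesis
  proof (cases y)
    case True
    hence "{i\<in>insert a A. (f(a:=y)) i} = insert a {i\<in>A. (f(a:=y)) i}" by auto
    thus ?thesis using True fA a e by simp
  next
    case False
    hence "{i\<in>insert a A. (f(a:=y)) i} = {i\<in>A. (f(a:=y)) i}" by auto
    thus ?thesis using False e by simp
  qed
qed

lemma law_insert:
  assumes "finite A" "a \<notin> A"
  shows "sum_indicators_law (insert a A) p =
    bind_pmf (bernoulli_pmf (p a)) (\<lambda>y. map_pmf (\<lambda>c. (if y then 1 else 0) + c) (sum_indicators_law A p))"
proof -
  let ?B = "\<lambda>i. bernoulli_pmf (p i)"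
  have "sum_indicators_law (insert a A) p = map_pmf (\<lambda>x. card {i\<in>insert a A. x i})
      (bind_pmf (?B a) (\<lambda>y. bind_pmf (Pi_pmf A False ?B) (\<lambda>f. return_pmf (f(a:=y)))))"
    unfolding sum_indicators_law_def using assms by (subst Pi_pmf_insert') auto
  also have "\<dots> = bind_pmf (?B a) (\<lambda>y. bind_pmf (Pi_pmf A False ?B)
        (\<lambda>f. return_pmf (card {i\<in>insert a A. (f(a:=y)) i})))"
    by (simp add: map_bind_pmf del: fun_upd_apply)
  also have "\<dots> = bind_pmf (?B a) (\<lambda>y. bind_pmf (Pi_pmf A False ?B)
        (\<lambda>f. return_pmf ((if y then 1 else 0) + card {i\<in>A. f i})))"
    by (intro bind_pmf_cong refl) (subst card_upd[OF assms], rule refl)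
  also have "\<dots> = bind_pmf (?B a) (\<lambda>y. map_pmf (\<lambda>c. (if y then 1 else 0) + c) (sum_indicators_law A p))"
    unfolding sum_indicators_law_def by (simp add: map_pmf_def bind_assoc_pmf bind_return_pmf)
  finally show ?thesis .
qed

lemma pmf_map_Suc: "pmf (map_pmf Suc M) x = (if x = 0 then 0 else pmf M (x - 1))"
proof (cases x)
  case 0
  have "pmf (map_pmf Suc M) 0 = measure M (Suc -` {0})" by (rule pmf_map)
  moreover have "Suc -` {0} = {}" by auto
  ultimately show ?thesis using 0 by simp
next
  case (Suc z)
  thus ?thesis using pmf_map_inj'[of Suc M z] by simp
qed

lemma plus_Suc0: "((+) (Suc 0)) = Suc" by (rule ext) simp
lemma plus_00: "((+) (0::nat)) = (\<lambda>x. x)" by (rule ext) simp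

lemma coeff_Bp_mult: "coeff (Bp r * Q) x = (1 - r) * coeff Q x + (if x = 0 then 0 else r * coeff Q (x - 1))"
  by (cases x) (simp_all add: Bp_def coeff_pCons')

lemma law_poly:
  assumes "finite A" "\<forall>i\<in>A. 0 \<le> p i \<and> p i \<le> 1"
  shows "pmf (sum_indicators_law A p) x = coeff (\<Prod>i\<in>A. Bp (p i)) x"
  using assms
proof (induction A arbitrary: x rule: finite_induct)
  case empty
  show ?case by (simp add: sum_indicators_law_def coeff_1 indicator_def)
next
  case (insert a A)
  have pa: "0 \<le> p a" "p a \<le> 1" using insert.prems by auto
  have "pmf (sum_indicators_law (insert a A) p) x
      = p a * pmf (map_pmf Suc (sum_indicators_law A p)) x + (1 - p a) * pmf (sum_indicators_law A p) x"
    unfolding law_insert[OF insert.hyps] pmf_bind using pa by (simp add: plus_Suc0 plus_00)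
  also have "\<dots> = coeff (Bp (p a) * (\<Prod>i\<in>A. Bp (p i))) x"
    using insert.IH insert.prems by (simp add: pmf_map_Suc coeff_Bp_mult algebra_simps)
  finally show ?case using insert.hyps by simp
qed

lemma degree_prod_Bp: "finite A \<Longrightarrow> degree (\<Prod>i\<in>A. Bp (p i)) \<le> card A"
proof (induction A rule: finite_induct)
  case (insert a A)
  have "degree (Bp (p a) * (\<Prod>i\<in>A. Bp (p i))) \<le> degree (Bp (p a)) + degree (\<Prod>i\<in>A. Bp (p i))"
    by (rule degree_mult_le)
  also have "\<dots> \<le> 1 + card A" using insert by (simp add: Bp_def)
  finally show ?case using insert by simp
qed simp

lemma tv_le_l1:
  assumes "finite A" "\<forall>i\<in>A. 0 \<le> p i \<and> p i \<le> 1" "\<forall>i\<in>A. 0 \<le> q i \<and> q i \<le> 1"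
  shows "tv_dist (sum_indicators_law A p) (sum_indicators_law A q)
          \<le> l1 ((\<Prod>i\<in>A. Bp (p i)) - (\<Prod>i\<in>A. Bp (q i)))"
  unfolding tv_dist_def
proof (rule cSUP_least)
  fix B :: "nat set"
  let ?P = "sum_indicators_law A p" and ?Q = "sum_indicators_law A q"
  let ?D = "(\<Prod>i\<in>A. Bp (p i)) - (\<Prod>i\<in>A. Bp (q i))"
  define N where "N = card A"
  have zP: "pmf ?P x = 0" if "x > N" for x
    using law_poly[OF assms(1,2), of x] degree_prod_Bp[OF assms(1), of p] that unfolding N_def
    by (simp add: coeff_eq_0)
  have zQ: "pmf ?Q x = 0" if "x > N" for x
    using law_poly[OF assms(1,3), of x] degree_prod_Bp[OF assms(1), of q] that unfolding N_def
    by (simp add: coeff_eq_0)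
  have mP: "measure_pmf.prob ?P B = measure_pmf.prob ?P (B \<inter> {..N})"
    by (rule measure_prob_cong_0) (auto intro: zP)
  have mQ: "measure_pmf.prob ?Q B = measure_pmf.prob ?Q (B \<inter> {..N})"
    by (rule measure_prob_cong_0) (auto intro: zQ)
  have "measure_pmf.prob ?P B - measure_pmf.prob ?Q B = (\<Sum>x\<in>B \<inter> {..N}. coeff ?D x)"
    unfolding mP mQ
    by (simp add: measure_measure_pmf_finite law_poly[OF assms(1,2)] law_poly[OF assms(1,3)] sum_subtractf)
  hence "\<bar>measure_pmf.prob ?P B - measure_pmf.prob ?Q B\<bar> \<le> (\<Sum>x\<in>B \<inter> {..N}. \<bar>coeff ?D x\<bar>)"
    by (simp add: sum_abs)
  also have "\<dots> \<le> (\<Sum>x\<le>N. \<bar>coeff ?D x\<bar>)" by (intro sum_mono2) auto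
  also have "\<dots> = l1 ?D"
  proof (rule l1_eq_bound[symmetric])
    show "degree ?D \<le> N"
      using degree_diff_le[OF degree_prod_Bp[OF assms(1), of p] degree_prod_Bp[OF assms(1), of q]]
      unfolding N_def .
  qed
  finally show "\<bar>measure_pmf.prob ?P B - measure_pmf.prob ?Q B\<bar> \<le> l1 ?D" .
qed simp

lemma PB_set: "finite S \<Longrightarrow> (\<Prod>i\<in>S. Bp (f i)) = PB (map f (sorted_list_of_set S))"
proof -
  assume "finite S"
  hence "(\<Prod>i\<in>S. Bp (f i)) = (\<Prod>i\<in>set (sorted_list_of_set S). Bp (f i))" by simp
  also have "\<dots> = prod_list (map (\<lambda>i. Bp (f i)) (sorted_list_of_set S))"
    by (rule prod.distinct_set_conv_list) simp
  finally show ?thesis by (simp add: PB_def o_def)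
qed

lemma PB_nth: "PB rs = (\<Prod>i\<in>{0..<length rs}. Bp (rs ! i))"
  unfolding PB_def by (subst prod.list_conv_set_nth) simp

lemma core_list1:
  assumes "0 < c" "c < 1/2" "\<forall>r\<in>set rs. c \<le> r \<and> r \<le> 1 - c"
  shows "l1 (Dp * PB rs) \<le> 2 * sqrt (1 / (2*c*(length rs + 1)))"
  using core1[of "{0..<length rs}" c "\<lambda>i. rs ! i"] assms unfolding PB_nth by auto

lemma core_list2:
  assumes "0 < c" "c < 1/2" "\<forall>r\<in>set rs. c \<le> r \<and> r \<le> 1 - c"
  shows "l1 (Dp * Dp * PB rs) \<le> 4 / (2*c*(length rs div 2 + 1))"
  using core2[of "{0..<length rs}" c "\<lambda>i. rs ! i"] assms unfolding PB_nth by auto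

lemma tele:
  fixes P Q :: "nat \<Rightarrow> real poly"
  assumes "finite J"
  shows "(\<forall>j\<in>J. \<forall>J1. J1 \<subseteq> J - {j} \<longrightarrow>
           l1 (Z * prod P J1 * prod Q (J - {j} - J1) * (P j - Q j)) \<le> cb j)
         \<Longrightarrow> l1 (Z * (prod P J - prod Q J)) \<le> sum cb J"
  using assms
proof (induction J arbitrary: Z rule: finite_induct)
  case empty thus ?case by simp
next
  case (insert a J)
  have h1: "l1 (Z * prod P J * (P a - Q a)) \<le> cb a"
  proof -
    have "insert a J - {a} - J = {}" by auto
    thus ?thesis using insert.prems[rule_format, of a J] insert.hyps by auto
  qed
  have h2: "l1 ((Z * Q a) * (prod P J - prod Q J)) \<le> sum cb J"
  proof (rule insert.IH, intro ballI allI impI)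
    fix j J1 assume j: "j \<in> J" and J1: "J1 \<subseteq> J - {j}"
    have "insert a J - {j} - J1 = insert a (J - {j} - J1)" using j J1 insert.hyps by auto
    hence "prod Q (insert a J - {j} - J1) = Q a * prod Q (J - {j} - J1)"
      using insert.hyps by simp
    moreover have "J1 \<subseteq> insert a J - {j}" using J1 by auto
    ultimately show "l1 (Z * Q a * prod P J1 * prod Q (J - {j} - J1) * (P j - Q j)) \<le> cb j"
      using insert.prems[rule_format, of j J1] j by (simp add: mult_ac)
  qed
  have "Z * (prod P (insert a J) - prod Q (insert a J))
      = Z * prod P J * (P a - Q a) + (Z * Q a) * (prod P J - prod Q J)"
    using insert.hyps by (simp add: algebra_simps)
  hence "l1 (Z * (prod P (insert a J) - prod Q (insert a J)))
       \<le> l1 (Z * prod P J * (P a - Q a)) + l1 ((Z * Q a) * (prod P J - prod Q J))"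
    by (simp add: l1_add)
  also have "\<dots> \<le> cb a + sum cb J" using h1 h2 by simp
  finally show ?case using insert.hyps by simp
qed

lemma num_term1:
  fixes k \<alpha> :: real and M :: nat
  assumes k: "k \<ge> 1" and a: "0 < \<alpha>"
  shows "(1/k)^2 * (real M * (4 / (k powr (\<alpha>-1) * real ((M - 2) div 2 + 1)))) \<le> 12 * k powr (-\<alpha>)"
proof -
  define s where "s = k powr (\<alpha>-1)"
  have s: "s > 0" unfolding s_def using k by simp
  have "M \<le> 3 * ((M - 2) div 2 + 1)" by presburger
  hence M3: "real M \<le> 3 * real ((M - 2) div 2 + 1)" by (metis of_nat_le_iff of_nat_mult of_nat_numeral)
  have q: "real ((M - 2) div 2 + 1) > 0" by simp
  have "real M * (4 / (s * real ((M - 2) div 2 + 1))) = 4 * (real M / real ((M - 2) div 2 + 1)) / s"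
    by (simp add: field_simps)
  also have "real M / real ((M - 2) div 2 + 1) \<le> 3" using M3 q by (simp add: divide_le_eq)
  hence "4 * (real M / real ((M - 2) div 2 + 1)) / s \<le> 4 * 3 / s" using s by (intro divide_right_mono mult_left_mono) auto
  finally have t: "real M * (4 / (s * real ((M - 2) div 2 + 1))) \<le> 12 / s" by simp
  have "(1/k)^2 * (real M * (4 / (s * real ((M - 2) div 2 + 1)))) \<le> (1/k)^2 * (12 / s)"
    using t by (intro mult_left_mono) auto
  also have "(1/k)^2 * (12 / s) = 12 * k powr (-1 - \<alpha>)"
  proof -
    have "(1/k)^2 = k powr (-2)" using k by (simp add: powr_minus powr_realpow divide_inverse power_inverse)
    moreover have "1 / s = k powr (1 - \<alpha>)" unfolding s_def using k by (simp add: powr_minus_divide[symmetric] powr_minus)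
    ultimately have "(1/k)^2 * (12 / s) = 12 * (k powr (-2) * k powr (1 - \<alpha>))" by (simp add: divide_inverse)
    also have "k powr (-2) * k powr (1 - \<alpha>) = k powr (-1 - \<alpha>)" using k by (simp add: powr_add[symmetric])
    finally show ?thesis .
  qed
  also have "\<dots> \<le> 12 * k powr (-\<alpha>)" using k by (intro mult_left_mono powr_mono) auto
  finally show ?thesis unfolding s_def .
qed

lemma num_term2:
  fixes k \<alpha> :: real and M K1 :: nat
  assumes k: "k \<ge> 1" and a: "0 < \<alpha>" and K1: "K1 \<le> M" "real K1 \<le> k"
  shows "(1/k) * (2 * sqrt (1 / (k powr (\<alpha>-1) * real M))) * real K1 \<le> 2 * k powr (-\<alpha>/2)"
proof (cases "M = 0")
  case True thus ?thesis using K1 by simp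
next
  case False
  define s where "s = k powr (\<alpha>-1)"
  have s: "s > 0" unfolding s_def using k by simp
  have Mp: "real M > 0" using False by simp
  have "sqrt (1 / (s * real M)) * real K1 = sqrt (real K1^2 / (s * real M))"
    by (simp add: real_sqrt_divide real_sqrt_mult)
  also have "real K1^2 / (s * real M) \<le> k / s"
  proof -
    have "real K1^2 \<le> k * real M" unfolding power2_eq_square
      using K1 Mp by (intro mult_mono) auto
    thus ?thesis using s Mp by (simp add: divide_simps)
  qed
  hence "sqrt (real K1^2 / (s * real M)) \<le> sqrt (k / s)" by (rule real_sqrt_le_mono)
  also have "k / s = k powr (2 - \<alpha>)" unfolding s_def using k powr_diff[of k 1 "\<alpha>-1"]
    by simp
  also have "sqrt (k powr (2 - \<alpha>)) = k powr (1 - \<alpha>/2)"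
  proof -
    have ee: "(1 - \<alpha>/2) + (1 - \<alpha>/2) = 2 - \<alpha>" by linarith
    have "k powr (1 - \<alpha>/2) * k powr (1 - \<alpha>/2) = k powr (2 - \<alpha>)"
      unfolding powr_add[symmetric] ee ..
    hence "sqrt (k powr (2 - \<alpha>)) = sqrt (k powr (1 - \<alpha>/2) * k powr (1 - \<alpha>/2))" by simp
    also have "\<dots> = \<bar>k powr (1 - \<alpha>/2)\<bar>" by (rule real_sqrt_abs2)
    also have "\<dots> = k powr (1 - \<alpha>/2)" by (rule abs_of_nonneg) (rule powr_ge_zero)
    finally show ?thesis .
  qed
  finally have t: "sqrt (1 / (s * real M)) * real K1 \<le> k powr (1 - \<alpha>/2)" .
  have "(1/k) * (2 * sqrt (1 / (s * real M))) * real K1 = (2/k) * (sqrt (1 / (s * real M)) * real K1)"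
    by simp
  also have "\<dots> \<le> (2/k) * k powr (1 - \<alpha>/2)" using t k by (intro mult_left_mono) auto
  also have "(2/k) * k powr (1 - \<alpha>/2) = 2 * k powr (-\<alpha>/2)"
  proof -
    have e1: "(1 - \<alpha>/2) - 1 = -\<alpha>/2" by linarith
    have "k powr ((1 - \<alpha>/2) - 1) = k powr (1 - \<alpha>/2) / k powr 1" by (rule powr_diff)
    hence "k powr (-\<alpha>/2) = k powr (1 - \<alpha>/2) / k" unfolding e1 using k by simp
    thus ?thesis by simp
  qed
  finally show ?thesis unfolding s_def .
qed

lemma lin_comb:
  fixes a b x y z w v :: real
  assumes "a \<le> 12 * x" "b \<le> 2 * y" "y \<le> z" "0 \<le> w" "0 \<le> v" "0 \<le> z"
  shows "a + b \<le> 12 * (z + x + w + v)"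
proof -
  have "12 * (z + x + w + v) = 12*z + 12*x + 12*w + 12 * v" by (simp add: distrib_left)
  thus ?thesis using assms by linarith
qed

lemma num_final:
  fixes k \<alpha> \<beta> :: real and M K1 :: nat
  assumes k: "k \<ge> 1" and a: "0 < \<alpha>" and b: "\<beta> < 1" and K1: "K1 \<le> M" "real K1 \<le> k"
  shows "(1/k)^2 * (real M * (4 / (k powr (\<alpha>-1) * real ((M - 2) div 2 + 1))))
       + (1/k) * (2 * sqrt (1 / (k powr (\<alpha>-1) * real M))) * real K1
     \<le> 12 * (k powr (-(\<alpha> + \<beta> - 1) / 2) + k powr (-\<alpha>) + k powr (-1/2) + k powr (-(1 - \<beta>)))"
proof (rule lin_comb[OF num_term1[OF k a, of M] num_term2[OF k a K1]])
  show "k powr (-\<alpha>/2) \<le> k powr (-(\<alpha> + \<beta> - 1) / 2)" using k b by (intro powr_mono) auto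
qed simp_all

lemma bucket_range:
  assumes k: "k > 0" and j: "j \<le> k div 2" and x: "x \<in> bucket k j"
  shows "real j / real k \<le> x \<and> x \<le> real j / real k + 1 / real k"
proof (cases "j < k div 2")
  case True
  hence "real j / real k \<le> x \<and> x < real (j+1) / real k" using x unfolding bucket_def by auto
  thus ?thesis by (simp add: add_divide_distrib)
next
  case False
  hence jj: "j = k div 2" using j by simp
  hence "real j / real k \<le> x \<and> x \<le> 1/2" using x False unfolding bucket_def by auto
  moreover have "1/2 \<le> real j / real k + 1 / real k"
  proof -
    have "real k \<le> 2 * real j + 2" unfolding jj by linarith
    thus ?thesis using k by (simp add: field_simps)
  qed
  ultimately show ?thesis by linarith
qed

lemma bucket_disj:
  assumes k: "k > 0" and j: "j \<le> k div 2" "j' \<le> k div 2" "j \<noteq> j'"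
  shows "bucket k j \<inter> bucket k j' = {}"
proof -
  have *: "bucket k a \<inter> bucket k b = {}" if "a < b" "b \<le> k div 2" for a b
  proof -
    have "a < k div 2" using that by simp
    hence "\<forall>x\<in>bucket k a. x < real (a+1) / real k" unfolding bucket_def by auto
    moreover have "\<forall>x\<in>bucket k b. real b / real k \<le> x"
    proof -
      have bb: "\<not> b < k div 2 \<Longrightarrow> b = k div 2" using that by simp
      show ?thesis unfolding bucket_def using bb by auto
    qed
    moreover have "real (a+1) / real k \<le> real b / real k" using that k by (simp add: divide_right_mono)
    ultimately show ?thesis by fastforce
  qed
  show ?thesis
  proof (cases "j < j'")
    case True thus ?thesis using * j by simp
  next
    case False thus ?thesis using *[of j' j] j by auto
  qed
qed

lemma range_c:
  fixes k :: nat and \<alpha> x :: real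
  assumes k4: "real k \<ge> 4" and ka: "real k powr \<alpha> \<ge> 2" and kb: "real k powr (\<alpha> - 1) \<le> 1/2"
  and j: "j \<in> medium_range \<alpha> k"
  and x: "real j / real k \<le> x" "x \<le> real j / real k + 1 / real k"
  shows "real k powr (\<alpha>-1) / 2 \<le> x \<and> x \<le> 1 - real k powr (\<alpha>-1) / 2"
proof
  have kp: "real k > 0" using k4 by simp
  have j0: "nat \<lfloor>real k powr \<alpha>\<rfloor> \<le> j" "j \<le> k div 2" using j unfolding medium_range_def by auto
  have "real k powr \<alpha> - 1 \<le> real j"
  proof -
    have "real k powr \<alpha> - 1 < of_int \<lfloor>real k powr \<alpha>\<rfloor>" by linarith
    also have "of_int \<lfloor>real k powr \<alpha>\<rfloor> = real (nat \<lfloor>real k powr \<alpha>\<rfloor>)" using ka by simp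
    also have "\<dots> \<le> real j" using j0 by simp
    finally show ?thesis by simp
  qed
  hence "real k powr \<alpha> / 2 \<le> real j" using ka by linarith
  hence "real k powr \<alpha> / 2 / real k \<le> real j / real k" by (rule divide_right_mono) (use kp in simp)
  moreover have "real k powr \<alpha> / real k = real k powr (\<alpha> - 1)"
    using kp powr_diff[of "real k" \<alpha> 1] by simp
  ultimately show "real k powr (\<alpha>-1) / 2 \<le> x" using x by (simp add: field_simps)
next
  have kp: "real k > 0" using k4 by simp
  have j0: "j \<le> k div 2" using j unfolding medium_range_def by auto
  have "real j \<le> real k / 2" using j0 by linarith
  hence "real j / real k \<le> 1/2" using kp by (simp add: divide_simps)
  moreover have "1 / real k \<le> 1/4" using k4 by (simp add: divide_simps)
  ultimately show "x \<le> 1 - real k powr (\<alpha>-1) / 2" using x kb by linarith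
qed

lemma Qprod:
  fixes m L :: nat
  assumes "m \<le> L"
  shows "(\<Prod>r\<in>{1..L}. if r \<le> m then X else (Y :: real poly)) = X ^ m * Y ^ (L - m)"
proof -
  have "(\<Prod>r\<in>{1..L}. if r \<le> m then X else Y) = (\<Prod>r\<in>{1..L} \<inter> {r. r \<le> m}. X) * (\<Prod>r\<in>{1..L} \<inter> - {r. r \<le> m}. Y)"
    by (rule prod.If_cases) simp
  moreover have "{1..L} \<inter> {r. r \<le> m} = {1..m}" using assms by auto
  moreover have "{1..L} \<inter> - {r. r \<le> m} = {m+1..L}" by auto
  ultimately show ?thesis by simp
qed

lemma PB_upt: "PB (map f [1..<L+1]) = (\<Prod>r\<in>{1..L}. Bp (f r))"
proof -
  have e: "set [1..<L+1] = {1..L}" by auto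
  have "(\<Prod>r\<in>{1..L}. Bp (f r)) = (\<Prod>r\<in>set [1..<L+1]. Bp (f r))"
    unfolding e ..
  also have "\<dots> = prod_list (map (\<lambda>r. Bp (f r)) [1..<L+1])"
    by (rule prod.distinct_set_conv_list) simp
  finally show ?thesis by (simp add: PB_def o_def)
qed

lemma sum_upt: "sum_list (map f [1..<L+1]) = (\<Sum>r\<in>{1..L}. (f r :: real))"
proof -
  have e: "set [1..<L+1] = {1..L}" by auto
  have "(\<Sum>r\<in>{1..L}. f r) = (\<Sum>r\<in>set [1..<L+1]. f r)"
    unfolding e ..
  also have "\<dots> = sum_list (map f [1..<L+1])"
    by (rule sum.distinct_set_conv_list) simp
  finally show ?thesis by simp
qed

lemma bucket_step:
  fixes P Q :: "nat \<Rightarrow> real poly" and I :: "nat \<Rightarrow> nat set" and p q :: "nat \<Rightarrow> real"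
  assumes finJ: "finite J" and finI: "\<forall>j. finite (I j)"
  and disj: "\<forall>j\<in>J. \<forall>j'\<in>J. j \<noteq> j' \<longrightarrow> I j \<inter> I j' = {}"
  and c: "0 < c" "c < 1/2"
  and pc: "\<forall>j\<in>J. \<forall>i\<in>I j. c \<le> p i \<and> p i \<le> 1 - c"
  and qc: "\<forall>j\<in>J. \<forall>i\<in>I j. c \<le> q i \<and> q i \<le> 1 - c"
  and Pdef: "\<forall>j. P j = (\<Prod>i\<in>I j. Bp (p i))" and Qdef: "\<forall>j. Q j = (\<Prod>i\<in>I j. Bp (q i))"
  and j: "j \<in> J" and J1: "J1 \<subseteq> J - {j}"
  and M: "M = (\<Sum>j\<in>J. card (I j))"
  and h: "h > 0" and lohc: "\<forall>x. lo \<le> x \<and> x \<le> lo + h \<longrightarrow> c \<le> x \<and> x \<le> 1 - c"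
  and ne: "I j \<noteq> {}" and L: "L = card (I j)"
  and bij: "bij_betw e {1..L} (I j)"
  and prng: "\<forall>i\<in>I j. lo \<le> p i \<and> p i \<le> lo + h"
  and m: "m = nat \<lfloor>(\<Sum>i\<in>I j. p i - lo) / h\<rfloor>"
  and qv: "\<forall>r\<in>{1..L}. q (e r) = (if r \<le> m then lo + h else lo)"
  shows "l1 (1 * prod P J1 * prod Q (J - {j} - J1) * (P j - Q j))
     \<le> real (L - 1) * h^2 * (4 / (2*c*real ((M - 2) div 2 + 1))) + h * (2 * sqrt (1 / (2*c*real M)))"
proof -
  define J2 where "J2 = J - {j} - J1"
  define U1 where "U1 = (\<Union>(I ` J1))"
  define U2 where "U2 = (\<Union>(I ` J2))"
  have fJ1: "finite J1" "finite J2" using J1 finJ unfolding J2_def by (auto intro: finite_subset)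
  have J1J: "J1 \<subseteq> J" "J2 \<subseteq> J" using J1 unfolding J2_def by auto
  have disj1: "\<forall>a\<in>J1. \<forall>b\<in>J1. a \<noteq> b \<longrightarrow> I a \<inter> I b = {}" using disj J1J by blast
  have disj2: "\<forall>a\<in>J2. \<forall>b\<in>J2. a \<noteq> b \<longrightarrow> I a \<inter> I b = {}" using disj J1J by blast
  have P1: "prod P J1 = (\<Prod>i\<in>U1. Bp (p i))"
    unfolding U1_def by (subst prod.UNION_disjoint) (use fJ1 finI disj1 Pdef in auto)
  have Q2: "prod Q J2 = (\<Prod>i\<in>U2. Bp (q i))"
    unfolding U2_def by (subst prod.UNION_disjoint) (use fJ1 finI disj2 Qdef in auto)
  have fU: "finite U1" "finite U2" unfolding U1_def U2_def using fJ1 finI by auto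
  define rs where "rs = map p (sorted_list_of_set U1) @ map q (sorted_list_of_set U2)"
  have R: "prod P J1 * prod Q J2 = PB rs"
    unfolding P1 Q2 rs_def PB_append using PB_set fU by metis
  have rs_c: "\<forall>r\<in>set rs. c \<le> r \<and> r \<le> 1 - c"
    unfolding rs_def U1_def U2_def using fU pc qc J1J unfolding U1_def U2_def by auto
  have cU1: "card U1 = (\<Sum>a\<in>J1. card (I a))"
    unfolding U1_def by (rule card_UN_disjoint) (use fJ1 finI disj1 in auto)
  have cU2: "card U2 = (\<Sum>a\<in>J2. card (I a))"
    unfolding U2_def by (rule card_UN_disjoint) (use fJ1 finI disj2 in auto)
  have Jsplit: "J = insert j (J1 \<union> J2)" "j \<notin> J1 \<union> J2" "J1 \<inter> J2 = {}"
    using j J1 unfolding J2_def by auto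
  have "M = card (I j) + (\<Sum>a\<in>J1. card (I a)) + (\<Sum>a\<in>J2. card (I a))"
    unfolding M using Jsplit fJ1 by (simp add: sum.union_disjoint)
  hence len: "length rs + L = M" unfolding rs_def L using cU1 cU2 fU by simp
  have L1: "L \<ge> 1" using ne finI L by (simp add: Suc_le_eq card_gt_0_iff)
  define ps where "ps = map (\<lambda>r. p (e r)) [1..<L+1]"
  have Pj: "P j = PB ps"
  proof -
    have "P j = (\<Prod>r\<in>{1..L}. Bp (p (e r)))"
      using Pdef prod.reindex_bij_betw[OF bij, of "\<lambda>i. Bp (p i)"] by simp
    thus ?thesis unfolding ps_def PB_upt .
  qed
  have sumps: "sum_list (map (\<lambda>x. x - lo) ps) = (\<Sum>i\<in>I j. p i - lo)"
  proof -
    have "sum_list (map (\<lambda>x. x - lo) ps) = (\<Sum>r\<in>{1..L}. p (e r) - lo)"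
      unfolding ps_def map_map o_def by (rule sum_upt)
    also have "\<dots> = (\<Sum>i\<in>I j. p i - lo)" by (rule sum.reindex_bij_betw[OF bij])
    finally show ?thesis .
  qed
  have set_ps: "\<forall>u\<in>set ps. lo \<le> u \<and> u \<le> lo + h"
    unfolding ps_def using prng bij unfolding bij_betw_def by auto
  have lenps: "length ps = L" unfolding ps_def by simp
  define \<Phi>1 where "\<Phi>1 = 2 * sqrt (1 / (2*c*real M))"
  define \<Phi>2 where "\<Phi>2 = 4 / (2*c*real ((M - 2) div 2 + 1))"
  have H2: "\<forall>us. (\<forall>u\<in>set us. lo \<le> u \<and> u \<le> lo + h) \<longrightarrow> length us + 2 = length ps
              \<longrightarrow> l1 (Dp * Dp * PB rs * PB us) \<le> \<Phi>2"
  proof (intro allI impI)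
    fix us assume us: "\<forall>u\<in>set us. lo \<le> u \<and> u \<le> lo + h" "length us + 2 = length ps"
    have "\<forall>r\<in>set (rs @ us). c \<le> r \<and> r \<le> 1 - c" using rs_c us lohc by auto
    hence "l1 (Dp * Dp * PB (rs @ us)) \<le> 4 / (2*c*(length (rs @ us) div 2 + 1))"
      using core_list2 c by blast
    moreover have "length (rs @ us) = M - 2" using len us lenps by simp
    ultimately show "l1 (Dp * Dp * PB rs * PB us) \<le> \<Phi>2"
      unfolding \<Phi>2_def by (simp add: PB_append mult.assoc)
  qed
  have H1: "\<forall>us. (\<forall>u\<in>set us. lo \<le> u \<and> u \<le> lo + h) \<longrightarrow> length us + 1 = length ps
              \<longrightarrow> l1 (Dp * PB rs * PB us) \<le> \<Phi>1"
  proof (intro allI impI)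
    fix us assume us: "\<forall>u\<in>set us. lo \<le> u \<and> u \<le> lo + h" "length us + 1 = length ps"
    have "\<forall>r\<in>set (rs @ us). c \<le> r \<and> r \<le> 1 - c" using rs_c us lohc by auto
    hence "l1 (Dp * PB (rs @ us)) \<le> 2 * sqrt (1 / (2*c*(length (rs @ us) + 1)))"
      using core_list1 c by blast
    moreover have eqM: "real M = real (length (rs @ us)) + 1"
    proof -
      have "M = length (rs @ us) + 1" using len us lenps by simp
      thus ?thesis by simp
    qed
    ultimately show "l1 (Dp * PB rs * PB us) \<le> \<Phi>1"
      unfolding \<Phi>1_def eqM by (simp add: PB_append mult.assoc add_ac)
  qed
  have mm: "m = nat \<lfloor>sum_list (map (\<lambda>x. x - lo) ps) / h\<rfloor>" unfolding sumps m ..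
  have B: "m \<le> length ps \<and> l1 (PB rs * (PB ps - Bp (lo+h) ^ m * Bp lo ^ (length ps - m)))
           \<le> real (length ps - 1) * h^2 * \<Phi>2 + h * \<Phi>1"
    by (rule bucket[OF h _ set_ps refl H2 H1 mm]) (use L1 lenps in auto)
  have Qj: "Q j = Bp (lo+h) ^ m * Bp lo ^ (L - m)"
  proof -
    have "Q j = (\<Prod>r\<in>{1..L}. Bp (q (e r)))"
      using Qdef prod.reindex_bij_betw[OF bij, of "\<lambda>i. Bp (q i)"] by simp
    also have "\<dots> = (\<Prod>r\<in>{1..L}. if r \<le> m then Bp (lo+h) else Bp lo)"
      using qv by (intro prod.cong refl) auto
    also have "\<dots> = Bp (lo+h) ^ m * Bp lo ^ (L - m)" using B lenps by (intro Qprod) auto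
    finally show ?thesis .
  qed
  have "1 * prod P J1 * prod Q (J - {j} - J1) * (P j - Q j) = PB rs * (PB ps - Bp (lo+h) ^ m * Bp lo ^ (length ps - m))"
    using R unfolding J2_def Pj Qj lenps by simp
  thus ?thesis using B lenps unfolding \<Phi>1_def \<Phi>2_def by simp
qed

lemma main_bound:
  fixes \<alpha> \<beta> :: real and k n :: nat and p q :: "nat \<Rightarrow> real"
  assumes a: "0 < \<alpha>" "\<alpha> < 1" "\<beta> < 1"
   and k4: "real k \<ge> 4" and ka: "real k powr \<alpha> \<ge> 2" and kb: "real k powr (\<alpha>-1) \<le> 1/2"
   and hp: "\<forall>i\<in>{1..n}. 0 \<le> p i \<and> p i \<le> 1"
   and mr: "medium_rounding \<alpha> n k p enum q"
  shows "tv_dist (sum_indicators_law (M1star \<alpha> n k p) p) (sum_indicators_law (M1star \<alpha> n k p) q)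
     \<le> 12 * (real k powr (-(\<alpha> + \<beta> - 1) / 2) + real k powr (-\<alpha>)
                    + real k powr (-1/2) + real k powr (-(1 - \<beta>)))"
proof -
  define J where "J = medium_range \<alpha> k"
  define I where "I = Istar n k p"
  define A where "A = M1star \<alpha> n k p"
  define s where "s = real k powr (\<alpha>-1)"
  define c where "c = s / 2"
  define h where "h = 1 / real k"
  have kp: "k > 0" using k4 by simp
  have h: "h > 0" unfolding h_def using kp by simp
  have c: "0 < c" "c < 1/2" unfolding c_def s_def using kb kp by auto
  have finJ: "finite J" unfolding J_def medium_range_def by simp
  have Jle: "\<forall>j\<in>J. j \<le> k div 2" unfolding J_def medium_range_def by auto
  have finI: "\<forall>j. finite (I j)" unfolding I_def Istar_def by simp
  have A_eq: "A = (\<Union>(I ` J))" unfolding A_def M1star_def I_def J_def by simp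
  have disj: "\<forall>j\<in>J. \<forall>j'\<in>J. j \<noteq> j' \<longrightarrow> I j \<inter> I j' = {}"
  proof (intro ballI impI)
    fix j j' assume "j \<in> J" "j' \<in> J" "j \<noteq> j'"
    hence "bucket k j \<inter> bucket k j' = {}" using Jle kp by (intro bucket_disj) auto
    thus "I j \<inter> I j' = {}" unfolding I_def Istar_def by auto
  qed
  have finA: "finite A" unfolding A_eq using finJ finI by auto
  have prng: "\<forall>j\<in>J. \<forall>i\<in>I j. real j / real k \<le> p i \<and> p i \<le> real j / real k + h"
    unfolding h_def I_def Istar_def using bucket_range kp Jle by blast
  have lohc: "\<forall>j\<in>J. \<forall>x. real j / real k \<le> x \<and> x \<le> real j / real k + h \<longrightarrow> c \<le> x \<and> x \<le> 1 - c"
    unfolding c_def s_def h_def J_def using range_c[OF k4 ka kb] by blast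
  have mrj: "\<forall>j\<in>J. bij_betw (enum j) {1..card (I j)} (I j) \<and>
        (\<forall>r\<in>{1..card (I j)}. q (enum j r) = (if int r \<le> m_j n k p j then real (j+1) / real k else real j / real k))"
    using mr unfolding medium_rounding_def J_def I_def by blast
  have jk: "real (j+1) / real k = real j / real k + h" for j unfolding h_def by (simp add: add_divide_distrib)
  have qrng: "\<forall>j\<in>J. \<forall>i\<in>I j. real j / real k \<le> q i \<and> q i \<le> real j / real k + h"
  proof (intro ballI)
    fix j i assume j: "j \<in> J" and i: "i \<in> I j"
    have "i \<in> enum j ` {1..card (I j)}" using mrj j i unfolding bij_betw_def by auto
    then obtain r where r: "r \<in> {1..card (I j)}" "enum j r = i" by (auto simp del: atLeastAtMost_iff)
    have "q i = (if int r \<le> m_j n k p j then real j / real k + h else real j / real k)"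
      using mrj j r jk by auto
    thus "real j / real k \<le> q i \<and> q i \<le> real j / real k + h" using h by auto
  qed
  have pc: "\<forall>j\<in>J. \<forall>i\<in>I j. c \<le> p i \<and> p i \<le> 1 - c" using prng lohc by blast
  have qc: "\<forall>j\<in>J. \<forall>i\<in>I j. c \<le> q i \<and> q i \<le> 1 - c" using qrng lohc by blast
  have pA: "\<forall>i\<in>A. 0 \<le> p i \<and> p i \<le> 1" using pc c unfolding A_eq by fastforce
  have qA: "\<forall>i\<in>A. 0 \<le> q i \<and> q i \<le> 1" using qc c unfolding A_eq by fastforce
  define P where "P j = (\<Prod>i\<in>I j. Bp (p i))" for j
  define Q where "Q j = (\<Prod>i\<in>I j. Bp (q i))" for j
  have PA: "(\<Prod>i\<in>A. Bp (p i)) = prod P J"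
    unfolding A_eq P_def by (rule prod.UNION_disjoint) (use finJ finI disj in auto)
  have QA: "(\<Prod>i\<in>A. Bp (q i)) = prod Q J"
    unfolding A_eq Q_def by (rule prod.UNION_disjoint) (use finJ finI disj in auto)
  define M where "M = card A"
  have M: "M = (\<Sum>j\<in>J. card (I j))" unfolding M_def A_eq by (rule card_UN_disjoint) (use finJ finI disj in auto)
  define \<Phi>1 where "\<Phi>1 = 2 * sqrt (1 / (2*c*real M))"
  define \<Phi>2 where "\<Phi>2 = 4 / (2*c*real ((M - 2) div 2 + 1))"
  define cb where "cb j = (if I j = {} then 0 else real (card (I j) - 1) * h^2 * \<Phi>2 + h * \<Phi>1)" for j
  have step: "\<forall>j\<in>J. \<forall>J1. J1 \<subseteq> J - {j} \<longrightarrow>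
           l1 (1 * prod P J1 * prod Q (J - {j} - J1) * (P j - Q j)) \<le> cb j"
  proof (intro ballI allI impI)
    fix j J1 assume j: "j \<in> J" and J1: "J1 \<subseteq> J - {j}"
    show "l1 (1 * prod P J1 * prod Q (J - {j} - J1) * (P j - Q j)) \<le> cb j"
    proof (cases "I j = {}")
      case True thus ?thesis unfolding cb_def P_def Q_def by simp
    next
      case False
      define lo where "lo = real j / real k"
      define m where "m = nat \<lfloor>(\<Sum>i\<in>I j. p i - lo) / h\<rfloor>"
      have mj: "m_j n k p j = \<lfloor>(\<Sum>i\<in>I j. p i - lo) / h\<rfloor>"
        unfolding m_j_def S_j_def I_def lo_def h_def by (simp add: mult.commute)
      have mj0: "m_j n k p j \<ge> 0"
      proof -
        have "(\<Sum>i\<in>I j. p i - lo) \<ge> 0" using prng j unfolding lo_def by (intro sum_nonneg) auto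
        thus ?thesis unfolding mj using h by simp
      qed
      have qv: "\<forall>r\<in>{1..card (I j)}. q (enum j r) = (if r \<le> m then lo + h else lo)"
      proof
        fix r assume r: "r \<in> {1..card (I j)}"
        have "(int r \<le> m_j n k p j) = (r \<le> m)" unfolding m_def mj[symmetric] using mj0 by linarith
        thus "q (enum j r) = (if r \<le> m then lo + h else lo)" using mrj j r jk unfolding lo_def by auto
      qed
      have "l1 (1 * prod P J1 * prod Q (J - {j} - J1) * (P j - Q j))
         \<le> real (card (I j) - 1) * h^2 * (4 / (2*c*real ((M - 2) div 2 + 1))) + h * (2 * sqrt (1 / (2*c*real M)))"
      proof (rule bucket_step[OF finJ finI disj c pc qc _ _ j J1 M h _ False refl _ _ m_def qv])
        show "\<forall>j. P j = (\<Prod>i\<in>I j. Bp (p i))" unfolding P_def by simp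
        show "\<forall>j. Q j = (\<Prod>i\<in>I j. Bp (q i))" unfolding Q_def by simp
        show "\<forall>x. lo \<le> x \<and> x \<le> lo + h \<longrightarrow> c \<le> x \<and> x \<le> 1 - c" using lohc j unfolding lo_def by blast
        show "bij_betw (enum j) {1..card (I j)} (I j)" using mrj j by blast
        show "\<forall>i\<in>I j. lo \<le> p i \<and> p i \<le> lo + h" using prng j unfolding lo_def by blast
      qed
      thus ?thesis unfolding cb_def \<Phi>1_def \<Phi>2_def using False by simp
    qed
  qed
  have tv: "tv_dist (sum_indicators_law A p) (sum_indicators_law A q) \<le> l1 (prod P J - prod Q J)"
    using tv_le_l1[OF finA pA qA] unfolding PA QA .
  also have "\<dots> \<le> sum cb J" using tele[where Z=1 and P=P and Q=Q and cb=cb, OF finJ step] by simp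
  also have "\<dots> \<le> h^2 * \<Phi>2 * real M + h * \<Phi>1 * real (card {j\<in>J. I j \<noteq> {}})"
  proof -
    have P2: "\<Phi>2 \<ge> 0" unfolding \<Phi>2_def using c by simp
    have P1: "\<Phi>1 \<ge> 0" unfolding \<Phi>1_def using c by simp
    have "sum cb J \<le> (\<Sum>j\<in>J. h^2 * \<Phi>2 * real (card (I j)) + (if I j \<noteq> {} then h * \<Phi>1 else 0))"
    proof (intro sum_mono)
      fix j assume "j \<in> J"
      have "real (card (I j) - 1) \<le> real (card (I j))" by simp
      hence "real (card (I j) - 1) * (h^2 * \<Phi>2) \<le> real (card (I j)) * (h^2 * \<Phi>2)"
        using P2 by (intro mult_right_mono) auto
      hence "real (card (I j) - 1) * h^2 * \<Phi>2 \<le> h^2 * \<Phi>2 * real (card (I j))"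
        by (simp add: mult_ac)
      thus "cb j \<le> h^2 * \<Phi>2 * real (card (I j)) + (if I j \<noteq> {} then h * \<Phi>1 else 0)"
        unfolding cb_def using P2 by auto
    qed
    also have "\<dots> = h^2 * \<Phi>2 * (\<Sum>j\<in>J. real (card (I j))) + (\<Sum>j\<in>J. if I j \<noteq> {} then h * \<Phi>1 else 0)"
      by (simp add: sum.distrib sum_distrib_left)
    also have "(\<Sum>j\<in>J. if I j \<noteq> {} then h * \<Phi>1 else 0) = h * \<Phi>1 * real (card {j\<in>J. I j \<noteq> {}})"
      using sum.inter_filter[OF finJ, of "\<lambda>_. h * \<Phi>1" "\<lambda>j. I j \<noteq> {}"] by (simp add: mult.commute)
    also have "(\<Sum>j\<in>J. real (card (I j))) = real M" unfolding M by simp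
    finally show ?thesis by simp
  qed
  also have "\<dots> \<le> 12 * (real k powr (-(\<alpha> + \<beta> - 1) / 2) + real k powr (-\<alpha>)
                    + real k powr (-1/2) + real k powr (-(1 - \<beta>)))"
  proof -
    define K1 where "K1 = card {j\<in>J. I j \<noteq> {}}"
    have K1M: "K1 \<le> M"
    proof -
      have "K1 = (\<Sum>j\<in>{j\<in>J. I j \<noteq> {}}. 1)" unfolding K1_def by simp
      also have "\<dots> \<le> (\<Sum>j\<in>{j\<in>J. I j \<noteq> {}}. card (I j))"
        using finI by (intro sum_mono) (auto simp: Suc_le_eq card_gt_0_iff)
      also have "\<dots> \<le> (\<Sum>j\<in>J. card (I j))" using finJ by (intro sum_mono2) auto
      finally show ?thesis unfolding M .
    qed
    have K1k: "real K1 \<le> real k"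
    proof -
      have "K1 \<le> card J" unfolding K1_def using finJ by (intro card_mono) auto
      also have "card J \<le> k div 2 + 1" unfolding J_def medium_range_def by simp
      also have "\<dots> \<le> k" using k4 by linarith
      finally show ?thesis by simp
    qed
    have "h^2 * \<Phi>2 * real M + h * \<Phi>1 * real K1 =
        (1/real k)^2 * (real M * (4 / (real k powr (\<alpha>-1) * real ((M - 2) div 2 + 1))))
       + (1/real k) * (2 * sqrt (1 / (real k powr (\<alpha>-1) * real M))) * real K1"
      unfolding h_def \<Phi>1_def \<Phi>2_def c_def s_def by simp
    also have "\<dots> \<le> 12 * (real k powr (-(\<alpha> + \<beta> - 1) / 2) + real k powr (-\<alpha>)
                    + real k powr (-1/2) + real k powr (-(1 - \<beta>)))"
      by (rule num_final) (use k4 a K1M K1k in auto)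
    finally show ?thesis unfolding K1_def .
  qed
  finally show ?thesis unfolding A_def .
qed

lemma big_k:
  fixes a :: real and k :: nat
  assumes a: "0 < a" and k: "real k \<ge> 2 powr (1/a)"
  shows "real k powr a \<ge> 2"
proof -
  have "(2 powr (1/a)) powr a \<le> real k powr a" using k a by (intro powr_mono2) auto
  moreover have "(2 powr (1/a)) powr a = 2" using a by (simp add: powr_powr)
  ultimately show ?thesis by simp
qed

theorem mainTheorem11:
  fixes \<alpha> \<beta> :: real
  assumes "0 < \<alpha>" "\<alpha> < 1" "0 < \<beta>" "\<beta> < 1" "\<alpha> + \<beta> > 1"
  shows "\<exists>C::real. \<exists>K::nat. \<forall>k\<ge>K. \<forall>(n::nat) (p::nat \<Rightarrow> real) enum (q::nat \<Rightarrow> real).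
           (\<forall>i\<in>{1..n}. 0 \<le> p i \<and> p i \<le> 1) \<longrightarrow>
           medium_rounding \<alpha> n k p enum q \<longrightarrow>
           tv_dist (sum_indicators_law (M1star \<alpha> n k p) p)
                   (sum_indicators_law (M1star \<alpha> n k p) q)
             \<le> C * (real k powr (-(\<alpha> + \<beta> - 1) / 2) + real k powr (-\<alpha>)
                    + real k powr (-1/2) + real k powr (-(1 - \<beta>)))"
proof -
  define K where "K = nat \<lceil>2 powr (1/\<alpha>)\<rceil> + nat \<lceil>2 powr (1/(1-\<alpha>))\<rceil> + 4"
  have main: "tv_dist (sum_indicators_law (M1star \<alpha> n k p) p) (sum_indicators_law (M1star \<alpha> n k p) q)
             \<le> 12 * (real k powr (-(\<alpha> + \<beta> - 1) / 2) + real k powr (-\<alpha>)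
                    + real k powr (-1/2) + real k powr (-(1 - \<beta>)))"
    if kK: "K \<le> k" and hp: "\<forall>i\<in>{1..n}. 0 \<le> p i \<and> p i \<le> 1"
      and mr: "medium_rounding \<alpha> n k p enum q" for k n p enum q
  proof -
    have k4: "real k \<ge> 4" using kK unfolding K_def by linarith
    have "real k \<ge> 2 powr (1/\<alpha>)"
    proof -
      have "2 powr (1/\<alpha>) \<le> real (nat \<lceil>2 powr (1/\<alpha>)\<rceil>)" by linarith
      also have "\<dots> \<le> real k" using kK unfolding K_def by linarith
      finally show ?thesis .
    qed
    hence ka: "real k powr \<alpha> \<ge> 2" using assms by (intro big_k) auto
    have "real k \<ge> 2 powr (1/(1-\<alpha>))"
    proof -
      have "2 powr (1/(1-\<alpha>)) \<le> real (nat \<lceil>2 powr (1/(1-\<alpha>))\<rceil>)" by linarith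
      also have "\<dots> \<le> real k" using kK unfolding K_def by linarith
      finally show ?thesis .
    qed
    hence kb0: "real k powr (1-\<alpha>) \<ge> 2" using assms by (intro big_k) auto
    have xy: "real k powr (\<alpha>-1) * real k powr (1-\<alpha>) = 1"
      using k4 powr_add[of "real k" "\<alpha>-1" "1-\<alpha>"] by simp
    have "real k powr (\<alpha>-1) * 2 \<le> real k powr (\<alpha>-1) * real k powr (1-\<alpha>)"
      by (intro mult_left_mono) (use kb0 in auto)
    hence kb: "real k powr (\<alpha>-1) \<le> 1/2" using xy by linarith
    show "tv_dist (sum_indicators_law (M1star \<alpha> n k p) p) (sum_indicators_law (M1star \<alpha> n k p) q)
             \<le> 12 * (real k powr (-(\<alpha> + \<beta> - 1) / 2) + real k powr (-\<alpha>)
                    + real k powr (-1/2) + real k powr (-(1 - \<beta>)))"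
      by (rule main_bound[OF _ _ _ k4 ka kb hp mr]) (use assms in auto)
  qed
  show ?thesis using main by blast
qed

end
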